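(* Let $\alpha,\beta\in(0,\pi]$ and let $f:S_\alpha\to S_\beta$, $f(z)=z^{\beta/\alpha}$ (principal branch). Then for all $x,y\in S_\alpha$: if $\alpha\le\beta$, $$s_{S_\alpha}(x,y)\le s_{S_\beta}(f(x),f(y))\le\frac{\beta\sin(\alpha/2)}{\alpha\sin(\beta/2)}\,s_{S_\alpha}(x,y);$$ otherwise (if $\alpha>\beta$), $$\frac{\beta\sin(\alpha/2)}{\alpha\sin(\beta/2)}\,s_{S_\alpha}(x,y)\le s_{S_\beta}(f(x),f(y))\le s_{S_\alpha}(x,y).$$ Furthermore, the constants here are sharp.
   Context: $S_\theta=\{x\in\mathbb{C}:0<\arg(x)<\theta\}$. For a domain $G\subsetneq\mathbb{C}$, $s_G(x,y)=\frac{|x-y|}{\inf_{z\in\partial G}(|x-z|+|z-y|)}$. *)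

theory Defs
  imports "HOL-Analysis.Analysis"
begin

text \<open>The sector S_theta = {x in C : 0 < arg x < theta}, with the principal argument Arg
  (values in (-pi, pi]); for 0 < theta <= pi this is the paper's sector.\<close>
definition sector :: "real \<Rightarrow> complex set" where
  "sector \<theta> = {x. 0 < Arg x \<and> Arg x < \<theta>}"

definition tri_ratio :: "complex set \<Rightarrow> complex \<Rightarrow> complex \<Rightarrow> real" where
  "tri_ratio G x y = cmod (x - y) / (INF z\<in>frontier G. cmod (x - z) + cmod (z - y))"

definition sector_pow :: "real \<Rightarrow> real \<Rightarrow> complex \<Rightarrow> complex" where
  "sector_pow \<alpha> \<beta> z = z powr (complex_of_real (\<beta> / \<alpha>))"

end

theory Submission
  imports Defs
begin


lemma sin_k_le:
  fixes k x :: real assumes k: "1 \<le> k" and x: "0 \<le> x" "k*x \<le> pi"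
  shows "sin (k*x) \<le> k * sin x"
proof -
  have "(\<lambda>t. k * sin t - sin(k*t)) 0 \<le> (\<lambda>t. k * sin t - sin(k*t)) x"
  proof (rule DERIV_nonneg_imp_nondecreasing[OF x(1)])
    fix t assume t: "0 \<le> t" "t \<le> x"
    have "t \<le> k*t" using t k by (simp add: mult_le_cancel_right1)
    moreover have "k*t \<le> pi" using t k x by (meson dual_order.trans mult_left_mono order.trans zero_le_one)
    ultimately have "cos (k*t) \<le> cos t" using t by (intro cos_monotone_0_pi_le) auto
    hence "0 \<le> k * cos t - k * cos (k*t)" using k by (simp add: mult_left_mono)
    moreover have "((\<lambda>t. k * sin t - sin(k*t)) has_real_derivative (k * cos t - k * cos (k*t))) (at t)"
      by (auto intro!: derivative_eq_intros)
    ultimately show "\<exists>y. ((\<lambda>t. k * sin t - sin(k*t)) has_real_derivative y) (at t) \<and> 0 \<le> y" by blast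
  qed
  thus ?thesis by simp
qed

lemma sinh_k_ge:
  fixes k L :: real assumes k: "1 \<le> k" and L: "0 \<le> L"
  shows "k * sinh L \<le> sinh (k*L)"
proof -
  have "(\<lambda>t. sinh(k*t) - k * sinh t) 0 \<le> (\<lambda>t. sinh(k*t) - k * sinh t) L"
  proof (rule DERIV_nonneg_imp_nondecreasing[OF L])
    fix t assume t: "0 \<le> t" "t \<le> L"
    have "t \<le> k*t" using t k by (simp add: mult_le_cancel_right1)
    hence "cosh t \<le> cosh (k*t)" using t by (subst cosh_real_nonneg_le_iff) auto
    hence "0 \<le> k * cosh (k*t) - k * cosh t" using k by (simp add: mult_left_mono)
    moreover have "((\<lambda>t. sinh(k*t) - k * sinh t) has_real_derivative (k * cosh (k*t) - k * cosh t)) (at t)"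
      by (auto intro!: derivative_eq_intros)
    ultimately show "\<exists>y. ((\<lambda>t. sinh(k*t) - k * sinh t) has_real_derivative y) (at t) \<and> 0 \<le> y" by blast
  qed
  thus ?thesis by simp
qed

lemma sinh_k_sq_ge:
  fixes k L :: real assumes k: "1 \<le> k"
  shows "k^2 * (sinh L)^2 \<le> (sinh (k*L))^2"
proof (cases "0 \<le> L")
  case True
  have "0 \<le> k * sinh L" using True k by simp
  with sinh_k_ge[OF k True] have "(k * sinh L)^2 \<le> (sinh (k*L))^2" by (intro power_mono) auto
  thus ?thesis by (simp add: power_mult_distrib)
next
  case False
  have "0 \<le> k * sinh (-L)" using False k by (simp del: sinh_minus)
  with sinh_k_ge[OF k, of "-L"] False have "(k * sinh (-L))^2 \<le> (sinh (k*(-L)))^2" by (intro power_mono) auto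
  thus ?thesis by (simp add: power_mult_distrib)
qed

lemma u_nonneg:
  fixes k x :: real assumes k: "1 \<le> k" and x: "0 \<le> x" "k*x \<le> pi"
  shows "k * cos (k*x) * sin x \<le> sin (k*x) * cos x"
proof -
  have "(\<lambda>t. sin (k*t) * cos t - k * cos (k*t) * sin t) 0 \<le> (\<lambda>t. sin (k*t) * cos t - k * cos (k*t) * sin t) x"
  proof (rule DERIV_nonneg_imp_nondecreasing[OF x(1)])
    fix t assume t: "0 \<le> t" "t \<le> x"
    have "t \<le> k*t" using t k by (simp add: mult_le_cancel_right1)
    moreover have "k*t \<le> pi" using t k x by (meson dual_order.trans mult_left_mono order.trans zero_le_one)
    ultimately have "0 \<le> sin (k*t)" "0 \<le> sin t" using t by (auto intro!: sin_ge_zero)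
    moreover have "0 \<le> k^2-1" using k by (simp add: one_le_power)
    ultimately have "0 \<le> (k^2-1) * sin (k*t) * sin t" by simp
    moreover have "((\<lambda>t. sin (k*t) * cos t - k * cos (k*t) * sin t) has_real_derivative ((k^2-1) * sin (k*t) * sin t)) (at t)"
      by (auto intro!: derivative_eq_intros simp: algebra_simps power2_eq_square)
    ultimately show "\<exists>y. ((\<lambda>t. sin (k*t) * cos t - k * cos (k*t) * sin t) has_real_derivative y) (at t) \<and> 0 \<le> y" by blast
  qed
  thus ?thesis by simp
qed

lemma h_mono:
  fixes k a b :: real assumes k: "1 \<le> k" and ab: "0 < a" "a \<le> b" "k*b < pi"
  shows "sin (k*b) * sin a \<le> sin (k*a) * sin b"
proof -
  have bpi: "b \<le> k*b" using ab k by (simp add: mult_le_cancel_right1)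
  have "(\<lambda>t. - (sin (k*t) / sin t)) a \<le> (\<lambda>t. - (sin (k*t) / sin t)) b"
  proof (rule DERIV_nonneg_imp_nondecreasing[OF ab(2)])
    fix t assume t: "a \<le> t" "t \<le> b"
    have "k*t \<le> k*b" using t k by simp
    hence "k*t < pi" using ab by simp
    moreover have "t \<le> k*t" using t ab k by (simp add: mult_le_cancel_right1)
    ultimately have "t < pi" by simp
    have sp: "0 < sin t" using t ab \<open>t < pi\<close> by (intro sin_gt_zero) auto
    have "k * cos (k*t) * sin t \<le> sin (k*t) * cos t" using u_nonneg[OF k, of t] t ab \<open>k*t<pi\<close> by auto
    hence "0 \<le> (sin (k*t) * cos t - k * cos (k*t) * sin t) / (sin t)^2" by simp
    moreover have "((\<lambda>t. - (sin (k*t) / sin t)) has_real_derivative ((sin (k*t) * cos t - k * cos (k*t) * sin t) / (sin t)^2)) (at t)"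
      using sp by (auto intro!: derivative_eq_intros simp: field_simps power2_eq_square)
    ultimately show "\<exists>y. ((\<lambda>t. - (sin (k*t) / sin t)) has_real_derivative y) (at t) \<and> 0 \<le> y" by blast
  qed
  hence "sin (k*b) / sin b \<le> sin (k*a) / sin a" by simp
  moreover have "b < pi" using ab bpi by linarith
  hence "0 < sin a" "0 < sin b" using ab by (auto intro!: sin_gt_zero)
  ultimately show ?thesis by (simp add: field_simps)
qed


lemma wh: fixes t :: real assumes "0 \<le> t" shows "t \<le> sinh t * cosh t"
proof -
  have "(\<lambda>t. sinh t * cosh t - t) 0 \<le> (\<lambda>t. sinh t * cosh t - t) t"
  proof (rule DERIV_nonneg_imp_nondecreasing[OF assms])
    fix x :: real
    have "((\<lambda>t. sinh t * cosh t - t) has_real_derivative (cosh x * cosh x + sinh x * sinh x - 1)) (at x)"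
      by (auto intro!: derivative_eq_intros)
    moreover have "cosh x * cosh x + sinh x * sinh x - 1 = 2 * (sinh x)^2"
      using cosh_square_eq[of x] by (simp add: power2_eq_square)
    ultimately show "\<exists>y. ((\<lambda>t. sinh t * cosh t - t) has_real_derivative y) (at x) \<and> 0 \<le> y" by auto
  qed
  thus ?thesis by simp
qed

lemma vh: fixes t :: real assumes "0 \<le> t" shows "t * cosh t \<le> sinh t + sinh t ^ 3 / 3"
proof -
  have "(\<lambda>t. sinh t + sinh t ^ 3 / 3 - t * cosh t) 0 \<le> (\<lambda>t. sinh t + sinh t ^ 3 / 3 - t * cosh t) t"
  proof (rule DERIV_nonneg_imp_nondecreasing[OF assms])
    fix x :: real assume x: "0 \<le> x" "x \<le> t"
    have "((\<lambda>t. sinh t + sinh t ^ 3 / 3 - t * cosh t) has_real_derivative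
        (cosh x + (3 * sinh x ^ 2 * cosh x) / 3 - (cosh x + x * sinh x))) (at x)"
      by (auto intro!: derivative_eq_intros)
    moreover have "cosh x + (3 * sinh x ^ 2 * cosh x) / 3 - (cosh x + x * sinh x) = sinh x * (sinh x * cosh x - x)"
      by (simp add: algebra_simps power2_eq_square)
    moreover have "0 \<le> sinh x * (sinh x * cosh x - x)" using wh[OF x(1)] x by simp
    ultimately show "\<exists>y. ((\<lambda>t. sinh t + sinh t ^ 3 / 3 - t * cosh t) has_real_derivative y) (at x) \<and> 0 \<le> y" by metis
  qed
  thus ?thesis by simp
qed

lemma mu_mono: fixes s t :: real assumes "0 < s" "s \<le> t"
  shows "s^2 / (sinh s)^2 + s^2/3 \<le> t^2 / (sinh t)^2 + t^2/3"
proof (rule DERIV_nonneg_imp_nondecreasing[OF assms(2), of "\<lambda>t. t^2 / (sinh t)^2 + t^2/3"])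
  fix x :: real assume x: "s \<le> x" "x \<le> t"
  hence xp: "0 < x" using assms by simp
  hence sp: "0 < sinh x" by simp
  have d: "((\<lambda>t. t^2 / (sinh t)^2 + t^2/3) has_real_derivative
      ((2*x) * (sinh x)^2 - x^2 * (2 * sinh x * cosh x)) / ((sinh x)^2)^2 + 2*x/3) (at x)"
    by (rule derivative_eq_intros refl | use sp in simp)+
  have e: "((2*x) * (sinh x)^2 - x^2 * (2 * sinh x * cosh x)) / ((sinh x)^2)^2 + 2*x/3
      = 2 * x * (sinh x + sinh x ^ 3 / 3 - x * cosh x) / (sinh x)^3"
  proof -
    have "((sinh x)^2)^2 = sinh x * (sinh x)^3" by (simp add: power2_eq_square power3_eq_cube)
    then show ?thesis using sp apply (simp add: divide_simps) by (simp add: algebra_simps power2_eq_square power3_eq_cube)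
  qed
  have p: "0 \<le> 2 * x * (sinh x + sinh x ^ 3 / 3 - x * cosh x) / (sinh x)^3"
    using vh[of x] xp sp by (intro divide_nonneg_pos mult_nonneg_nonneg) auto
  from d[unfolded e] p show "\<exists>y. ((\<lambda>t. t^2 / (sinh t)^2 + t^2/3) has_real_derivative y) (at x) \<and> 0 \<le> y" by blast
qed

lemma ws: fixes t :: real assumes "0 \<le> t" shows "sin t * cos t \<le> t"
proof -
  have "(\<lambda>t. t - sin t * cos t) 0 \<le> (\<lambda>t. t - sin t * cos t) t"
  proof (rule DERIV_nonneg_imp_nondecreasing[OF assms])
    fix x :: real
    have "((\<lambda>t. t - sin t * cos t) has_real_derivative (1 - (cos x * cos x - sin x * sin x))) (at x)"
      by (auto intro!: derivative_eq_intros)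
    moreover have "1 - (cos x * cos x - sin x * sin x) = 2 * (sin x)^2"
      using sin_cos_squared_add[of x] by (simp add: power2_eq_square)
    ultimately show "\<exists>y. ((\<lambda>t. t - sin t * cos t) has_real_derivative y) (at x) \<and> 0 \<le> y" by auto
  qed
  thus ?thesis by simp
qed

lemma vs: fixes t :: real assumes "0 \<le> t" "t \<le> pi" shows "t * cos t + sin t ^ 3 / 3 \<le> sin t"
proof -
  have "(\<lambda>t. sin t - sin t ^ 3 / 3 - t * cos t) 0 \<le> (\<lambda>t. sin t - sin t ^ 3 / 3 - t * cos t) t"
  proof (rule DERIV_nonneg_imp_nondecreasing[OF assms(1)])
    fix x :: real assume x: "0 \<le> x" "x \<le> t"
    have "((\<lambda>t. sin t - sin t ^ 3 / 3 - t * cos t) has_real_derivative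
        (cos x - (3 * sin x ^ 2 * cos x) / 3 - (cos x - x * sin x))) (at x)"
      by (auto intro!: derivative_eq_intros)
    moreover have "cos x - (3 * sin x ^ 2 * cos x) / 3 - (cos x - x * sin x) = sin x * (x - sin x * cos x)"
      by (simp add: algebra_simps power2_eq_square)
    moreover have "0 \<le> sin x" using x assms by (intro sin_ge_zero) auto
    hence "0 \<le> sin x * (x - sin x * cos x)" using ws[OF x(1)] by simp
    ultimately show "\<exists>y. ((\<lambda>t. sin t - sin t ^ 3 / 3 - t * cos t) has_real_derivative y) (at x) \<and> 0 \<le> y" by metis
  qed
  thus ?thesis by simp
qed

lemma nu_mono: fixes s t :: real assumes "0 < s" "s \<le> t" "t < pi"
  shows "s^2 / (sin s)^2 - s^2/3 \<le> t^2 / (sin t)^2 - t^2/3"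
proof (rule DERIV_nonneg_imp_nondecreasing[OF assms(2), of "\<lambda>t. t^2 / (sin t)^2 - t^2/3"])
  fix x :: real assume x: "s \<le> x" "x \<le> t"
  hence xp: "0 < x" "x < pi" using assms by auto
  hence sp: "0 < sin x" by (intro sin_gt_zero) auto
  have d: "((\<lambda>t. t^2 / (sin t)^2 - t^2/3) has_real_derivative
      ((2*x) * (sin x)^2 - x^2 * (2 * sin x * cos x)) / ((sin x)^2)^2 - 2*x/3) (at x)"
    by (rule derivative_eq_intros refl | use sp in simp)+
  have e: "((2*x) * (sin x)^2 - x^2 * (2 * sin x * cos x)) / ((sin x)^2)^2 - 2*x/3
      = 2 * x * (sin x - sin x ^ 3 / 3 - x * cos x) / (sin x)^3"
  proof -
    have "((sin x)^2)^2 = sin x * (sin x)^3" by (simp add: power2_eq_square power3_eq_cube)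
    then show ?thesis using sp apply (simp add: divide_simps) by (simp add: algebra_simps power2_eq_square power3_eq_cube)
  qed
  have p: "0 \<le> 2 * x * (sin x - sin x ^ 3 / 3 - x * cos x) / (sin x)^3"
    using vs[of x] xp sp by (intro divide_nonneg_pos mult_nonneg_nonneg) auto
  from d[unfolded e] p show "\<exists>y. ((\<lambda>t. t^2 / (sin t)^2 - t^2/3) has_real_derivative y) (at x) \<and> 0 \<le> y" by blast
qed


lemma sin_sq_diff: fixes a b :: real shows "(sin b)^2 - (sin a)^2 = sin (b+a) * sin (b-a)"
proof -
  have "sin (b+a) * sin (b-a) = (sin b * cos a)^2 - (cos b * sin a)^2"
    by (simp add: sin_add sin_diff power2_eq_square algebra_simps)
  also have "\<dots> = (sin b)^2 * (1 - (sin a)^2) - (1 - (sin b)^2) * (sin a)^2"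
    by (simp add: power_mult_distrib cos_squared_eq)
  finally show ?thesis by (simp add: algebra_simps)
qed

lemma keyB:
  fixes k L b :: real
  assumes k: "1 \<le> k" and b: "0 < b" and kb: "k*b < pi"
  shows "(sinh L)^2 * (sinh (k*L))^2 * (k^2 * (sin b)^2 - (sin (k*b))^2)
       + (sin b)^2 * (sin (k*b))^2 * (k^2 * (sinh L)^2 - (sinh (k*L))^2) \<ge> 0"
proof (cases "L = 0")
  case True thus ?thesis by simp
next
  case False
  define L0 where "L0 = \<bar>L\<bar>"
  have L0: "0 < L0" using False by (simp add: L0_def)
  have SL: "(sinh L)^2 = (sinh L0)^2" "(sinh (k*L))^2 = (sinh (k*L0))^2"
    unfolding L0_def by (cases "L \<ge> 0"; simp)+
  define S where "S = (sinh L0)^2"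
  define S' where "S' = (sinh (k*L0))^2"
  define q where "q = (sin b)^2"
  define q' where "q' = (sin (k*b))^2"
  have kL0: "L0 \<le> k*L0" using L0 k by simp
  have Sp: "0 < S" using L0 by (simp add: S_def)
  have S'p: "0 < S'" using L0 k by (simp add: S'_def)
  have bkb: "b \<le> k*b" using b k by simp
  have "0 < sin b" using b bkb kb pi_gt_zero by (intro sin_gt_zero) linarith+
  hence qp: "0 < q" unfolding q_def by simp
  have "0 < sin (k*b)" using b k kb pi_gt_zero by (intro sin_gt_zero) (simp, linarith)
  hence q'p: "0 < q'" unfolding q'_def by simp
  have m: "L0^2 / S + L0^2/3 \<le> (k*L0)^2 / S' + (k*L0)^2/3"
    using mu_mono[OF L0 kL0] by (simp add: S_def S'_def)
  hence m2: "L0^2 * (1/S - k^2/S') \<le> L0^2 * ((k^2 - 1)/3)"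
    by (simp add: power_mult_distrib algebra_simps add_divide_distrib diff_divide_distrib)
  hence m3: "1/S - k^2/S' \<le> (k^2 - 1)/3" using L0 by simp
  have n: "b^2 / q - b^2/3 \<le> (k*b)^2 / q' - (k*b)^2/3"
    using nu_mono[OF b bkb kb] by (simp add: q_def q'_def)
  hence n2: "b^2 * ((k^2 - 1)/3) \<le> b^2 * (k^2/q' - 1/q)"
    by (simp add: power_mult_distrib algebra_simps add_divide_distrib diff_divide_distrib)
  hence n3: "(k^2 - 1)/3 \<le> k^2/q' - 1/q" using b by simp
  have "1/S - k^2/S' \<le> k^2/q' - 1/q" using m3 n3 by linarith
  hence "(1/S - k^2/S') * (S*S'*q*q') \<le> (k^2/q' - 1/q) * (S*S'*q*q')"
    using Sp S'p qp q'p by (intro mult_right_mono) auto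
  hence "S'*q*q' - k^2*S*q*q' \<le> k^2*S*S'*q - S*S'*q'"
    using Sp S'p qp q'p by (simp add: algebra_simps)
  hence "S * S' * (k^2 * q - q') + q * q' * (k^2 * S - S') \<ge> 0"
    by (simp add: algebra_simps)
  thus ?thesis unfolding SL S_def S'_def q_def q'_def .
qed

lemma abstract_ineq:
  fixes k L a b \<alpha> :: real
  assumes k: "1 \<le> k" and a: "0 \<le> a" and ab: "a \<le> b" and b: "0 < b" and kb: "k*b \<le> pi/2"
    and b\<alpha>: "b \<le> \<alpha>/2" and k\<alpha>: "k*\<alpha> \<le> pi"
  defines "S \<equiv> (sinh L)^2" and "S' \<equiv> (sinh (k*L))^2"
    and "p \<equiv> (sin a)^2" and "q \<equiv> (sin b)^2" and "p' \<equiv> (sin (k*a))^2" and "q' \<equiv> (sin (k*b))^2"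
    and "C \<equiv> k * sin (\<alpha>/2) / sin (k*\<alpha>/2)"
  shows "(S+p)/(S+q) \<le> (S'+p')/(S'+q')" and "(S'+p')/(S'+q') \<le> C^2 * ((S+p)/(S+q))"
proof -
  have bkb: "b \<le> k*b" using b k by simp
  have akb: "k*a \<le> k*b" using ab k by (simp add: mult_left_mono)
  have aka: "a \<le> k*a" using a k by (simp add: mult_le_cancel_right1)
  have kpos: "0 < k" using k by simp
  have kbpi: "k*b \<le> pi" "k*b < pi" using kb pi_gt_zero by linarith+
  have kb0: "0 \<le> k*b" using kpos b by simp
  have S0: "0 \<le> S" "0 \<le> S'" by (simp_all add: S_def S'_def)
  have "0 < sin b" using b bkb kb pi_gt_zero by (intro sin_gt_zero) linarith+
  hence qp: "0 < q" unfolding q_def by simp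
  have "0 < sin (k*b)" using b k kb pi_gt_zero by (intro sin_gt_zero) (simp, linarith)
  hence q'p: "0 < q'" unfolding q'_def by simp
  have p0: "0 \<le> p" "0 \<le> p'" by (simp_all add: p_def p'_def)
  have sa0: "0 \<le> sin a" using a ab bkb kb by (intro sin_ge_zero) auto
  have ka0: "0 \<le> k*a" using kpos a by simp
  hence ska0: "0 \<le> sin (k*a)" using akb kb pi_gt_zero by (intro sin_ge_zero) linarith+
  have pq: "p \<le> q" unfolding p_def q_def using sa0 ab a bkb kb
    by (intro power_mono sin_monotone_2pi_le) auto
  have A: "k^2 * S \<le> S'" unfolding S_def S'_def by (rule sinh_k_sq_ge[OF k])
  have Cp: "p' \<le> k^2 * p"
  proof -
    have "k*a \<le> pi" using akb kb pi_gt_zero by linarith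
    hence "sin (k*a) \<le> k * sin a" using sin_k_le[OF k a] by simp
    hence "(sin (k*a))^2 \<le> (k * sin a)^2" using ska0 by (intro power_mono) auto
    thus ?thesis by (simp add: p_def p'_def power_mult_distrib)
  qed
  have Cq: "q' \<le> k^2 * q"
  proof -
    have "sin (k*b) \<le> k * sin b" using sin_k_le[OF k, of b] b kbpi by simp
    moreover have "0 \<le> sin (k*b)" using kb0 kbpi by (intro sin_ge_zero) auto
    ultimately have "(sin (k*b))^2 \<le> (k * sin b)^2" by (intro power_mono) auto
    thus ?thesis by (simp add: q_def q'_def power_mult_distrib)
  qed
  have ii: "q' - p' \<le> k^2 * (q - p)"
  proof -
    have e1: "q - p = sin (b+a) * sin (b-a)" unfolding q_def p_def by (rule sin_sq_diff)
    have e2: "q' - p' = sin (k*(b+a)) * sin (k*(b-a))" unfolding q'_def p'_def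
      using sin_sq_diff[of "k*b" "k*a"] by (simp add: distrib_left right_diff_distrib)
    have r1: "k*(b+a) \<le> pi" "k*(b-a) \<le> pi" "0 \<le> b - a"
      using kb akb ab ka0 kbpi unfolding distrib_left right_diff_distrib by linarith+
    have s1: "sin (k*(b+a)) \<le> k * sin (b+a)" using sin_k_le[OF k, of "b+a"] r1 a b by simp
    have s2: "sin (k*(b-a)) \<le> k * sin (b-a)" using sin_k_le[OF k, of "b-a"] r1 by simp
    have n1: "0 \<le> sin (k*(b+a))" using r1 a b kpos by (intro sin_ge_zero) auto
    have n2: "0 \<le> sin (k*(b-a))" using r1 kpos by (intro sin_ge_zero) auto
    have "sin (k*(b+a)) * sin (k*(b-a)) \<le> (k * sin (b+a)) * (k * sin (b-a))"
      using s1 s2 n1 n2 by (intro mult_mono) auto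
    thus ?thesis using e1 e2 by (simp add: power2_eq_square algebra_simps)
  qed
  have iii: "p * q' \<le> p' * q"
  proof (cases "a = 0")
    case True thus ?thesis by (simp add: p_def p'_def)
  next
    case False
    hence "0 < a" using a by simp
    moreover have "k*b < pi" using kbpi by simp
    ultimately have "sin (k*b) * sin a \<le> sin (k*a) * sin b" using h_mono[OF k _ ab] by simp
    moreover have "0 \<le> sin (k*b) * sin a" using sa0 sin_ge_zero[OF kb0 kbpi(1)] by simp
    ultimately have "(sin (k*b) * sin a)^2 \<le> (sin (k*a) * sin b)^2" by (intro power_mono) auto
    thus ?thesis by (simp add: p_def p'_def q_def q'_def power_mult_distrib algebra_simps)
  qed
  have d1: "0 < S + q" "0 < S' + q'" using S0 qp q'p by auto
  have h1: "k^2 * S * (q - p) \<le> S' * (q - p)" using A pq by (intro mult_right_mono) auto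
  have h2: "S * (q' - p') \<le> S * (k^2 * (q - p))" using ii S0 by (intro mult_left_mono) auto
  have "(S+p)*(S'+q') \<le> (S'+p')*(S+q)"
  proof -
    have "(S'+p')*(S+q) - (S+p)*(S'+q') = S'*(q-p) - S*(q'-p') + (p'*q - p*q')"
      by (simp add: algebra_simps)
    also have "\<dots> \<ge> 0" using h1 h2 iii by (simp add: algebra_simps)
    finally show ?thesis by simp
  qed
  thus "(S+p)/(S+q) \<le> (S'+p')/(S'+q')" using d1 by (simp add: divide_simps)
  have B: "S * S' * (k^2 * q - q') + q * q' * (k^2 * S - S') \<ge> 0"
    using keyB[OF k b kbpi(2), of L] unfolding S_def S'_def q_def q'_def by simp
  have m1: "S * (q' * p') \<le> S * ((k^2 * q) * (k^2 * p))"
    using Cp Cq p0 q'p S0 by (intro mult_left_mono mult_mono) auto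
  have m2: "(k^2 * q * p) * (k^2 * S) \<le> (k^2 * q * p) * S'"
    using A qp p0 by (intro mult_left_mono) auto
  have m3: "0 \<le> q * q' * (k^2 * p - p')" using Cp qp q'p by simp
  have main: "q' * ((S'+p')*(S+q)) \<le> k^2 * q * ((S+p)*(S'+q'))"
  proof -
    have "k^2 * q * ((S+p)*(S'+q')) - q' * ((S'+p')*(S+q))
        = (S * S' * (k^2 * q - q') + q * q' * (k^2 * S - S')) + (k^2*q*p*S' - q'*p'*S) + q * q' * (k^2 * p - p')"
      by (simp add: algebra_simps)
    also have "\<dots> \<ge> 0" using B m1 m2 m3 by (simp add: algebra_simps)
    finally show ?thesis by simp
  qed
  have nz: "q' * (S+q) \<noteq> 0" using d1 q'p by simp
  have e1: "(S'+p')/(S'+q') = (q' * ((S'+p')*(S+q))) / (q' * (S+q) * (S'+q'))"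
    using nonzero_mult_divide_mult_cancel_left[OF nz, of "S'+p'" "S'+q'"] by (simp add: ac_simps)
  have e2: "(k^2*q/q') * ((S+p)/(S+q)) = (k^2 * q * ((S+p)*(S'+q'))) / (q' * (S+q) * (S'+q'))"
    using nonzero_mult_divide_mult_cancel_right[of "S'+q'" "k^2*q*(S+p)" "q'*(S+q)"] d1
    by (simp add: ac_simps)
  have "0 \<le> q' * (S+q) * (S'+q')" using d1 q'p by simp
  with main have u1: "(S'+p')/(S'+q') \<le> (k^2 * q / q') * ((S+p)/(S+q))"
    unfolding e1 e2 by (rule divide_right_mono)
  have c1: "k^2 * q / q' \<le> C^2"
  proof -
    have "k*\<alpha> < 2*pi" using k\<alpha> pi_gt_zero by linarith
    hence b2: "b \<le> \<alpha>/2" "k*(\<alpha>/2) < pi" using b\<alpha> by auto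
    have "sin (k*(\<alpha>/2)) * sin b \<le> sin (k*b) * sin (\<alpha>/2)" using h_mono[OF k b b2(1) b2(2)] .
    moreover have "0 < k*(\<alpha>/2)" using b b\<alpha> kpos by simp
    hence "0 < sin (k*(\<alpha>/2))" using b2 by (intro sin_gt_zero) auto
    moreover have "0 < sin (k*b)" using b kbpi kpos by (intro sin_gt_zero) auto
    moreover have "0 \<le> sin b" using b bkb kbpi by (intro sin_ge_zero) linarith+
    ultimately have "k * sin b / sin (k*b) \<le> C" unfolding C_def using kpos
      by (simp add: divide_simps algebra_simps mult_left_mono)
    moreover have "0 \<le> k * sin b / sin (k*b)" using \<open>0 \<le> sin b\<close> \<open>0 < sin (k*b)\<close> kpos by simp
    ultimately have "(k * sin b / sin (k*b))^2 \<le> C^2" by (intro power_mono)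
    thus ?thesis by (simp add: q_def q'_def power_divide power_mult_distrib)
  qed
  have "0 \<le> (S+p)/(S+q)" using d1 S0 p0 by simp
  with c1 have "(k^2 * q / q') * ((S+p)/(S+q)) \<le> C^2 * ((S+p)/(S+q))" by (intro mult_right_mono)
  with u1 show "(S'+p')/(S'+q') \<le> C^2 * ((S+p)/(S+q))" by linarith
qed


definition P2 :: "real \<Rightarrow> complex \<Rightarrow> real" where
  "P2 \<theta> z = Re z * sin \<theta> - Im z * cos \<theta>"

lemma P2_rcis: "P2 \<theta> (rcis r \<phi>) = r * sin (\<theta> - \<phi>)"
  by (simp add: P2_def sin_diff algebra_simps)

lemma sector_char:
  assumes t: "0 < \<theta>" "\<theta> \<le> pi"
  shows "z \<in> sector \<theta> \<longleftrightarrow> 0 < Im z \<and> 0 < P2 \<theta> z"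
proof (cases "z = 0")
  case True thus ?thesis by (simp add: sector_def P2_def Arg_zero)
next
  case False
  define r where "r = cmod z"
  define \<phi> where "\<phi> = Arg z"
  have r: "0 < r" using False by (simp add: r_def)
  have z: "z = rcis r \<phi>" by (simp add: r_def \<phi>_def rcis_cmod_Arg)
  have \<phi>b: "-pi < \<phi>" "\<phi> \<le> pi" using Arg_bounded[of z] by (auto simp: \<phi>_def)
  have "0 < \<phi> \<and> \<phi> < \<theta> \<longleftrightarrow> 0 < sin \<phi> \<and> 0 < sin (\<theta> - \<phi>)"
  proof
    assume h: "0 < \<phi> \<and> \<phi> < \<theta>"
    show "0 < sin \<phi> \<and> 0 < sin (\<theta> - \<phi>)"
      using h t by (auto intro!: sin_gt_zero)
  next
    assume h: "0 < sin \<phi> \<and> 0 < sin (\<theta> - \<phi>)"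
    have "0 < \<phi>"
    proof (rule ccontr)
      assume "\<not> 0 < \<phi>"
      hence "0 \<le> sin (-\<phi>)" using \<phi>b by (intro sin_ge_zero) auto
      thus False using h by simp
    qed
    moreover have "\<phi> < \<theta>"
    proof (rule ccontr)
      assume "\<not> \<phi> < \<theta>"
      hence "0 \<le> sin (\<phi> - \<theta>)" using \<phi>b t by (intro sin_ge_zero) auto
      moreover have "sin (\<phi> - \<theta>) = - sin (\<theta> - \<phi>)" by (metis minus_diff_eq sin_minus)
      ultimately show False using h by simp
    qed
    ultimately show "0 < \<phi> \<and> \<phi> < \<theta>" by simp
  qed
  moreover have "Im z = r * sin \<phi>" "P2 \<theta> z = r * sin (\<theta> - \<phi>)" by (simp_all add: z P2_rcis)
  ultimately show ?thesis using r by (simp add: sector_def \<phi>_def[symmetric] zero_less_mult_iff)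
qed

lemma sector_eq:
  assumes t: "0 < \<theta>" "\<theta> \<le> pi"
  shows "sector \<theta> = {z. 0 < Im z} \<inter> {z. 0 < P2 \<theta> z}"
  using sector_char[OF t] by auto

lemma open_sector:
  assumes t: "0 < \<theta>" "\<theta> \<le> pi"
  shows "open (sector \<theta>)"
  unfolding sector_eq[OF t] P2_def
  by (intro open_Int open_Collect_less continuous_intros)

lemma closure_sector:
  assumes t: "0 < \<theta>" "\<theta> \<le> pi"
  shows "closure (sector \<theta>) = {z. 0 \<le> Im z \<and> 0 \<le> P2 \<theta> z}"
proof
  have "closed ({z. 0 \<le> Im z} \<inter> {z. 0 \<le> P2 \<theta> z})"
    unfolding P2_def by (intro closed_Int closed_Collect_le continuous_intros)
  moreover have "sector \<theta> \<subseteq> {z. 0 \<le> Im z} \<inter> {z. 0 \<le> P2 \<theta> z}"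
    using sector_char[OF t] by auto
  ultimately have "closure (sector \<theta>) \<subseteq> {z. 0 \<le> Im z} \<inter> {z. 0 \<le> P2 \<theta> z}"
    by (intro closure_minimal)
  thus "closure (sector \<theta>) \<subseteq> {z. 0 \<le> Im z \<and> 0 \<le> P2 \<theta> z}" by blast
next
  show "{z. 0 \<le> Im z \<and> 0 \<le> P2 \<theta> z} \<subseteq> closure (sector \<theta>)"
  proof
    fix z assume z: "z \<in> {z. 0 \<le> Im z \<and> 0 \<le> P2 \<theta> z}"
    have s2: "0 < sin (\<theta>/2)" using t by (intro sin_gt_zero) auto
    have e2: "P2 \<theta> (cis (\<theta>/2)) = sin (\<theta>/2)"
      using P2_rcis[of \<theta> 1 "\<theta>/2"] by (simp add: rcis_def)
    show "z \<in> closure (sector \<theta>)"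
      unfolding closure_approachable
    proof (intro allI impI)
      fix e :: real assume e: "0 < e"
      define y where "y = z + of_real (e/2) * cis (\<theta>/2)"
      have "Im y = Im z + e/2 * sin (\<theta>/2)" by (simp add: y_def)
      moreover have "0 < e * sin (\<theta>/2) / 2" using e s2 by simp
      ultimately have iy: "0 < Im y" using z by simp
      have "P2 \<theta> y = P2 \<theta> z + e/2 * P2 \<theta> (cis (\<theta>/2))"
        by (simp add: y_def P2_def algebra_simps)
      moreover have "0 < e/2 * P2 \<theta> (cis (\<theta>/2))" using e s2 e2 by simp
      ultimately have "0 < P2 \<theta> y" using z by simp
      with iy have ys: "y \<in> sector \<theta>" using sector_char[OF t, of y] by blast
      have "dist y z = cmod (of_real (e/2) * cis (\<theta>/2))" by (simp add: y_def dist_norm)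
      also have "\<dots> = e/2" using e by (simp add: norm_mult)
      finally have "dist y z < e" using e by simp
      with ys show "\<exists>y\<in>sector \<theta>. dist y z < e" by blast
    qed
  qed
qed

lemma frontier_sector:
  assumes t: "0 < \<theta>" "\<theta> \<le> pi"
  shows "frontier (sector \<theta>) = {z. 0 \<le> Im z \<and> 0 \<le> P2 \<theta> z} - sector \<theta>"
  unfolding frontier_def closure_sector[OF t] interior_open[OF open_sector[OF t]] ..

lemma frontier_cases:
  assumes t: "0 < \<theta>" "\<theta> \<le> pi" and z: "z \<in> frontier (sector \<theta>)"
  shows "Im z = 0 \<or> P2 \<theta> z = 0"
  using z unfolding frontier_sector[OF t] using sector_char[OF t] by auto

lemma bound_real:
  assumes "Im z = 0"
  shows "cmod (x - cnj y) \<le> cmod (x - z) + cmod (z - y)"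
proof -
  have "cnj z = z" using assms by (simp add: complex_eq_iff)
  hence "cmod (z - y) = cmod (z - cnj y)"
    by (metis complex_cnj_cnj complex_cnj_diff complex_mod_cnj)
  moreover have "cmod (x - cnj y) \<le> cmod (x - z) + cmod (z - cnj y)"
    by (rule norm_diff_triangle_ineq[of x z z "cnj y", simplified] )
  ultimately show ?thesis by simp
qed

lemma bound_ray:
  assumes "P2 \<theta> z = 0"
  shows "cmod (x - cis (2*\<theta>) * cnj y) \<le> cmod (x - z) + cmod (z - y)"
proof -
  define w where "w = z * cis (-\<theta>)"
  have "Im w = 0" using assms by (simp add: w_def P2_def algebra_simps)
  hence cw: "cnj w = w" by (simp add: complex_eq_iff)
  have "cis \<theta> * w = z * (cis \<theta> * cis (-\<theta>))" by (simp add: w_def ac_simps)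
  hence zw: "z = cis \<theta> * w" by (simp add: cis_mult)
  have "cmod (z - y) = cmod (cis (-\<theta>) * (z - y))" by (simp add: norm_mult)
  also have "cis (-\<theta>) * (z - y) = w - cis (-\<theta>) * y" by (simp add: w_def algebra_simps)
  also have "cmod \<dots> = cmod (cnj (w - cis (-\<theta>) * y))" by (metis complex_mod_cnj)
  also have "cnj (w - cis (-\<theta>) * y) = w - cis \<theta> * cnj y" by (simp add: cw cis_cnj)
  also have "cmod (w - cis \<theta> * cnj y) = cmod (cis \<theta> * (w - cis \<theta> * cnj y))" by (simp add: norm_mult)
  also have "cis \<theta> * (w - cis \<theta> * cnj y) = z - (cis \<theta> * cis \<theta>) * cnj y"
    by (simp add: zw right_diff_distrib mult.assoc)
  also have "cis \<theta> * cis \<theta> = cis (2*\<theta>)" by (simp add: cis_mult)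
  finally have "cmod (z - y) = cmod (z - cis (2*\<theta>) * cnj y)" .
  moreover have "cmod (x - cis (2*\<theta>) * cnj y) \<le> cmod (x - z) + cmod (z - cis (2*\<theta>) * cnj y)"
    by (rule norm_diff_triangle_ineq[of x z z, simplified])
  ultimately show ?thesis by simp
qed


lemma dist_rcis_sq: "(cmod (rcis r a - rcis q b)) ^ 2 = r ^ 2 + q ^ 2 - 2 * r * q * cos (a - b)"
proof -
  have "(cmod (rcis r a - rcis q b)) ^ 2 = (r * cos a - q * cos b) ^ 2 + (r * sin a - q * sin b) ^ 2"
    by (simp add: cmod_power2)
  also have "\<dots> = r ^ 2  *  ((sin a) ^ 2 + (cos a) ^ 2) + q ^ 2  *  ((sin b) ^ 2 + (cos b) ^ 2) - 2 * r * q * (cos a  *  cos b + sin a  *  sin b)"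
    unfolding power2_eq_square by algebra
  also have "\<dots> = r ^ 2 + q ^ 2 - 2 * r * q * cos (a - b)" by (simp only: sin_cos_squared_add cos_diff)
  finally show ?thesis .
qed

lemma cnj_rcis: "cnj (rcis r a) = rcis r (-a)"
  by (simp add: rcis_def cis_cnj)

lemma cis_rcis: "cis b * rcis r a = rcis r (b + a)"
  by (simp add: rcis_def cis_mult mult.left_commute)

definition srefl :: "real \<Rightarrow> complex \<Rightarrow> complex" where
  "srefl \<theta> z = cis \<theta> * cnj z"

lemma refl_Im: "Im (srefl \<theta> z) = P2 \<theta> z"
  by (simp add: srefl_def P2_def algebra_simps)

lemma refl_P2: "P2 \<theta> (srefl \<theta> z) = Im z"
proof -
  have "P2 \<theta> (srefl \<theta> z) = Im z * (cos \<theta> * cos \<theta>) + Im z * (sin \<theta> * sin \<theta>)"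
    by (simp add: srefl_def P2_def algebra_simps)
  also have "\<dots> = Im z * (cos \<theta> * cos \<theta> + sin \<theta> * sin \<theta>)" by (simp only: distrib_left)
  also have "\<dots> = Im z" by simp
  finally show ?thesis .
qed

lemma refl_refl: "srefl \<theta> (srefl \<theta> z) = z"
proof -
  have "srefl \<theta> (srefl \<theta> z) = (cis \<theta> * cis (-\<theta>)) * z" by (simp add: srefl_def cis_cnj mult.assoc)
  thus ?thesis by (simp add: cis_mult)
qed

lemma refl_dist: "cmod (srefl \<theta> a - srefl \<theta> b) = cmod (a - b)"
proof -
  have "srefl \<theta> a - srefl \<theta> b = cis \<theta> * cnj (a - b)" by (simp add: srefl_def algebra_simps)
  hence "cmod (srefl \<theta> a - srefl \<theta> b) = cmod (cnj (a - b))" by (simp only: norm_mult norm_cis)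
  thus ?thesis by (simp only: complex_mod_cnj)
qed

lemma refl_rcis: "srefl \<theta> (rcis r a) = rcis r (\<theta> - a)"
  by (simp add: srefl_def cnj_rcis cis_rcis)

lemma refl_frontier:
  assumes t: "0 < \<theta>" "\<theta> \<le> pi" and z: "z \<in> frontier (sector \<theta>)"
  shows "srefl \<theta> z \<in> frontier (sector \<theta>)"
  using z unfolding frontier_sector[OF t] using sector_char[OF t] refl_Im refl_P2 by auto

lemma attain0:
  assumes "0 < Im x" "0 < Im y"
  defines "s \<equiv> Im x / (Im x + Im y)"
  defines "z0 \<equiv> x + of_real s * (cnj y - x)"
  shows "Im z0 = 0" "Re z0 = (Re x * Im y + Im x * Re y)/(Im x + Im y)"
    "cmod (x - z0) + cmod (z0 - y) = cmod (x - cnj y)"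
proof -
  have d: "0 < Im x + Im y" using assms by simp
  have s01: "0 \<le> s" "s \<le> 1" using assms by (auto simp: s_def divide_simps)
  have ss: "s * (Im x + Im y) = Im x" using d by (simp add: s_def)
  show im: "Im z0 = 0" unfolding z0_def using ss by (simp add: algebra_simps)
  show "Re z0 = (Re x * Im y + Im x * Re y)/(Im x + Im y)"
    unfolding z0_def s_def using d by (simp add: field_simps)
  have "cnj z0 = z0" using im by (simp add: complex_eq_iff)
  hence f1: "cmod (z0 - y) = cmod (z0 - cnj y)"
    by (metis complex_cnj_cnj complex_cnj_diff complex_mod_cnj)
  have "x - z0 = - (of_real s * (cnj y - x))" by (simp add: z0_def)
  hence f2: "cmod (x - z0) = s * cmod (x - cnj y)" using s01
    by (simp add: norm_mult norm_minus_commute)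
  have e: "z0 - cnj y = of_real (1 - s) * (x - cnj y)" by (simp add: z0_def algebra_simps)
  have "cmod (z0 - cnj y) = cmod (of_real (1 - s) * (x - cnj y))" by (simp only: e)
  also have "\<dots> = (1 - s) * cmod (x - cnj y)" unfolding norm_mult norm_of_real using s01 by simp
  finally have "cmod (z0 - cnj y) = (1 - s) * cmod (x - cnj y)" .
  with f1 f2 show "cmod (x - z0) + cmod (z0 - y) = cmod (x - cnj y)" by (simp add: algebra_simps)
qed

lemma attain_case0:
  assumes t: "0 < \<theta>" "\<theta> \<le> pi" and r: "0 < r" "0 < \<rho>"
    and ang: "0 < \<phi>" "\<phi> < \<theta>" "0 < \<psi>" "\<psi> < \<theta>"
    and le: "cmod (rcis r \<phi> - cnj (rcis \<rho> \<psi>)) \<le> cmod (rcis r \<phi> - cis (2*\<theta>) * cnj (rcis \<rho> \<psi>))"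
  shows "\<exists>z\<in>frontier (sector \<theta>). cmod (rcis r \<phi> - z) + cmod (z - rcis \<rho> \<psi>) = cmod (rcis r \<phi> - cnj (rcis \<rho> \<psi>))"
proof -
  define x where "x = rcis r \<phi>"
  define y where "y = rcis \<rho> \<psi>"
  have spos: "0 < sin \<phi>" "0 < sin \<psi>" using ang t by (auto intro!: sin_gt_zero)
  have ix: "0 < Im x" "0 < Im y" using spos r by (simp_all add: x_def y_def)
  define z0 where "z0 = x + of_real (Im x / (Im x + Im y)) * (cnj y - x)"
  note at = attain0[OF ix, folded z0_def]
  have "(cmod (rcis r \<phi> - cnj (rcis \<rho> \<psi>)))^2 \<le> (cmod (rcis r \<phi> - cis (2*\<theta>) * cnj (rcis \<rho> \<psi>)))^2"
    using le by (intro power_mono) auto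
  hence "r^2 + \<rho>^2 - 2*r*\<rho>*cos (\<phi> - (-\<psi>)) \<le> r^2 + \<rho>^2 - 2*r*\<rho>*cos (\<phi> - (2*\<theta> + - \<psi>))"
    by (simp only: cnj_rcis cis_rcis dist_rcis_sq)
  hence "r*\<rho>*cos (\<phi> + \<psi> - 2*\<theta>) \<le> r*\<rho>*cos (\<phi> + \<psi>)" by (simp add: algebra_simps)
  hence c: "cos ((\<phi> + \<psi> - \<theta>) - \<theta>) \<le> cos ((\<phi> + \<psi> - \<theta>) + \<theta>)" using r by (simp add: algebra_simps)
  define v where "v = \<phi> + \<psi> - \<theta>"
  have "sin v * sin \<theta> \<le> 0" using c unfolding v_def[symmetric] by (simp add: cos_add cos_diff)
  have st: "0 \<le> sin \<theta>" using t by (intro sin_ge_zero) auto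
  have key: "0 \<le> sin (\<phi> + \<psi>) * sin \<theta>"
  proof (cases "sin \<theta> = 0")
    case True thus ?thesis by simp
  next
    case False
    hence "0 < sin \<theta>" using st by simp
    hence "sin v \<le> 0" using \<open>sin v * sin \<theta> \<le> 0\<close> by (simp add: mult_le_0_iff)
    have "v \<le> 0"
    proof (rule ccontr)
      assume "\<not> v \<le> 0"
      hence "0 < sin v" using ang t by (intro sin_gt_zero) (auto simp: v_def)
      thus False using \<open>sin v \<le> 0\<close> by simp
    qed
    hence "0 \<le> sin (\<phi> + \<psi>)" using ang t by (intro sin_ge_zero) (auto simp: v_def)
    thus ?thesis using st by simp
  qed
  have "Re x * Im y + Im x * Re y = r * \<rho> * sin (\<phi> + \<psi>)"
    by (simp add: x_def y_def sin_add algebra_simps)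
  hence "Re z0 * sin \<theta> = (r * \<rho>) * (sin (\<phi> + \<psi>) * sin \<theta>) / (Im x + Im y)"
    using at(2) by simp
  hence "0 \<le> Re z0 * sin \<theta>" using key r ix by simp
  hence "z0 \<in> frontier (sector \<theta>)"
    unfolding frontier_sector[OF t] using sector_char[OF t, of z0] at(1) by (simp add: P2_def)
  with at(3) show ?thesis unfolding x_def y_def by blast
qed


lemma inf_eq:
  assumes t: "0 < \<theta>" "\<theta> \<le> pi" and r: "0 < r" "0 < \<rho>"
    and ang: "0 < \<phi>" "\<phi> < \<theta>" "0 < \<psi>" "\<psi> < \<theta>"
  defines "x \<equiv> rcis r \<phi>" and "y \<equiv> rcis \<rho> \<psi>"
  shows "(INF z\<in>frontier (sector \<theta>). cmod (x - z) + cmod (z - y))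
        = min (cmod (x - cnj y)) (cmod (x - cis (2*\<theta>) * cnj y))"
proof -
  let ?F = "frontier (sector \<theta>)"
  let ?g = "\<lambda>z. cmod (x - z) + cmod (z - y)"
  let ?m = "min (cmod (x - cnj y)) (cmod (x - cis (2*\<theta>) * cnj y))"
  have "0 \<in> ?F" unfolding frontier_sector[OF t] using sector_char[OF t, of 0] by (simp add: P2_def)
  hence ne: "?F \<noteq> {}" by blast
  have lb: "\<And>z. z \<in> ?F \<Longrightarrow> ?m \<le> ?g z"
  proof -
    fix z assume z: "z \<in> ?F"
    from frontier_cases[OF t z] show "?m \<le> ?g z"
    proof
      assume "Im z = 0"
      from bound_real[OF this, of x y] show ?thesis by linarith
    next
      assume "P2 \<theta> z = 0"
      from bound_ray[OF this, of x y] show ?thesis by linarith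
    qed
  qed
  have bdd: "bdd_below (?g ` ?F)" by (rule bdd_belowI[of _ 0]) auto
  have ge: "?m \<le> (INF z\<in>?F. ?g z)" using ne lb by (intro cINF_greatest) auto
  have le: "(INF z\<in>?F. ?g z) \<le> ?m"
  proof (cases "cmod (x - cnj y) \<le> cmod (x - cis (2*\<theta>) * cnj y)")
    case True
    then obtain z where z: "z \<in> ?F" "?g z = cmod (x - cnj y)"
      using attain_case0[OF t r ang] unfolding x_def y_def by blast
    have "(INF z\<in>?F. ?g z) \<le> ?g z" using z(1) bdd by (intro cINF_lower)
    thus ?thesis using z(2) True by simp
  next
    case False
    define x' where "x' = rcis r (\<theta> - \<phi>)"
    define y' where "y' = rcis \<rho> (\<theta> - \<psi>)"
    have ang': "0 < \<theta> - \<phi>" "\<theta> - \<phi> < \<theta>" "0 < \<theta> - \<psi>" "\<theta> - \<psi> < \<theta>" using ang by auto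
    have e1: "cmod (x' - cnj y') = cmod (x - cis (2*\<theta>) * cnj y)"
    proof -
      have "(\<theta> - \<phi>) - - (\<theta> - \<psi>) = - (\<phi> - (2*\<theta> + - \<psi>))" by simp
      hence "cos ((\<theta> - \<phi>) - - (\<theta> - \<psi>)) = cos (\<phi> - (2*\<theta> + - \<psi>))" by (simp only: cos_minus)
      hence "(cmod (x' - cnj y'))^2 = (cmod (x - cis (2*\<theta>) * cnj y))^2"
        unfolding x_def y_def x'_def y'_def cnj_rcis cis_rcis dist_rcis_sq by simp
      thus ?thesis by (simp add: power2_eq_iff_nonneg)
    qed
    have e2: "cmod (x' - cis (2*\<theta>) * cnj y') = cmod (x - cnj y)"
    proof -
      have "(\<theta> - \<phi>) - (2*\<theta> + - (\<theta> - \<psi>)) = - (\<phi> - - \<psi>)" by simp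
      hence "cos ((\<theta> - \<phi>) - (2*\<theta> + - (\<theta> - \<psi>))) = cos (\<phi> - - \<psi>)" by (simp only: cos_minus)
      hence "(cmod (x' - cis (2*\<theta>) * cnj y'))^2 = (cmod (x - cnj y))^2"
        unfolding x_def y_def x'_def y'_def cnj_rcis cis_rcis dist_rcis_sq by simp
      thus ?thesis by (simp add: power2_eq_iff_nonneg)
    qed
    have "cmod (x' - cnj y') \<le> cmod (x' - cis (2*\<theta>) * cnj y')" using False e1 e2 by simp
    then obtain z' where z': "z' \<in> ?F" "cmod (x' - z') + cmod (z' - y') = cmod (x' - cnj y')"
      using attain_case0[OF t r ang'] unfolding x'_def y'_def by blast
    have xr: "x = srefl \<theta> x'" "y = srefl \<theta> y'" by (simp_all add: x_def y_def x'_def y'_def refl_rcis)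
    have zF: "srefl \<theta> z' \<in> ?F" using refl_frontier[OF t z'(1)] .
    have "?g (srefl \<theta> z') = cmod (x' - z') + cmod (z' - y')"
      unfolding xr refl_dist ..
    hence gz: "?g (srefl \<theta> z') = ?m" using z'(2) e1 False by simp
    have "(INF z\<in>?F. ?g z) \<le> ?g (srefl \<theta> z')" using zF bdd by (intro cINF_lower)
    thus ?thesis using gz by simp
  qed
  from ge le show ?thesis by linarith
qed

lemma tri_ratio_polar:
  assumes t: "0 < \<theta>" "\<theta> \<le> pi" and r: "0 < r" "0 < \<rho>"
    and ang: "0 < \<phi>" "\<phi> < \<theta>" "0 < \<psi>" "\<psi> < \<theta>"
  shows "tri_ratio (sector \<theta>) (rcis r \<phi>) (rcis \<rho> \<psi>) =
     cmod (rcis r \<phi> - rcis \<rho> \<psi>) / min (cmod (rcis r \<phi> - cnj (rcis \<rho> \<psi>))) (cmod (rcis r \<phi> - cis (2*\<theta>) * cnj (rcis \<rho> \<psi>)))"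
  unfolding tri_ratio_def inf_eq[OF assms] ..


lemma dist_rcis_S:
  assumes "0 < r" "0 < q"
  shows "(cmod (rcis r a - rcis q b))^2 = 4 * r * q * ((r - q)^2 / (4 * r * q) + (sin ((a - b)/2))^2)"
proof -
  have e: "a - b = 2 * ((a - b)/2)" by simp
  have c: "cos (a - b) = 1 - 2 * (sin ((a - b)/2))^2"
    by (subst (1) e, rule cos_double_sin)
  have "(cmod (rcis r a - rcis q b))^2 = (r - q)^2 + 4 * r * q * (sin ((a - b)/2))^2"
    unfolding dist_rcis_sq c by (simp add: power2_eq_square algebra_simps)
  also have "\<dots> = 4 * r * q * ((r - q)^2 / (4 * r * q) + (sin ((a - b)/2))^2)"
    using assms by (simp add: field_simps)
  finally show ?thesis .
qed

lemma sin_sq_abs: "(sin (\<bar>x\<bar>/2))^2 = (sin ((x::real)/2))^2"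
  by (cases "x \<ge> 0") (simp_all add: power2_eq_square)

lemma min_sin_sq:
  assumes t: "0 < \<theta>" "\<theta> \<le> pi" and u: "0 < u" "u < 2*\<theta>"
  shows "min ((sin (u/2))^2) ((sin ((2*\<theta> - u)/2))^2) = (sin (min u (2*\<theta> - u) / 2))^2"
proof -
  have st: "0 \<le> sin \<theta>" using t by (intro sin_ge_zero) auto
  show ?thesis
  proof (cases "u \<le> 2*\<theta> - u")
    case True
    have "(sin ((2*\<theta> - u)/2))^2 - (sin (u/2))^2 = sin ((2*\<theta> - u)/2 + u/2) * sin ((2*\<theta> - u)/2 - u/2)"
      by (rule sin_sq_diff)
    also have "\<dots> = sin \<theta> * sin (\<theta> - u)"
    proof -
      have h: "(2*\<theta> - u)/2 + u/2 = \<theta>" "(2*\<theta> - u)/2 - u/2 = \<theta> - u" by (simp_all add: field_simps)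
      show ?thesis by (simp only: h)
    qed
    also have "\<dots> \<ge> 0" using True st t u by (intro mult_nonneg_nonneg sin_ge_zero) auto
    finally show ?thesis using True by (simp add: min_def)
  next
    case False
    have "(sin (u/2))^2 - (sin ((2*\<theta> - u)/2))^2 = sin (u/2 + (2*\<theta> - u)/2) * sin (u/2 - (2*\<theta> - u)/2)"
      by (rule sin_sq_diff)
    also have "\<dots> = sin \<theta> * sin (u - \<theta>)"
    proof -
      have h: "u/2 + (2*\<theta> - u)/2 = \<theta>" "u/2 - (2*\<theta> - u)/2 = u - \<theta>" by (simp_all add: field_simps)
      show ?thesis by (simp only: h)
    qed
    also have "\<dots> \<ge> 0" using False st t u by (intro mult_nonneg_nonneg sin_ge_zero) auto
    finally show ?thesis using False by (simp add: min_def)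
  qed
qed

lemma tri_sq_form:
  assumes t: "0 < \<theta>" "\<theta> \<le> pi" and r: "0 < r" "0 < \<rho>"
    and ang: "0 < \<phi>" "\<phi> < \<theta>" "0 < \<psi>" "\<psi> < \<theta>"
  shows "(tri_ratio (sector \<theta>) (rcis r \<phi>) (rcis \<rho> \<psi>))^2 =
     ((r - \<rho>)^2 / (4 * r * \<rho>) + (sin (\<bar>\<phi> - \<psi>\<bar>/2))^2) /
     ((r - \<rho>)^2 / (4 * r * \<rho>) + (sin (min (\<phi> + \<psi>) (2*\<theta> - (\<phi> + \<psi>)) / 2))^2)"
proof -
  define S where "S = (r - \<rho>)^2 / (4 * r * \<rho>)"
  define D where "D = cmod (rcis r \<phi> - rcis \<rho> \<psi>)"
  define A0 where "A0 = cmod (rcis r \<phi> - cnj (rcis \<rho> \<psi>))"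
  define A1 where "A1 = cmod (rcis r \<phi> - cis (2*\<theta>) * cnj (rcis \<rho> \<psi>))"
  have c: "0 < 4 * r * \<rho>" using r by simp
  have D2: "D^2 = 4 * r * \<rho> * (S + (sin (\<bar>\<phi> - \<psi>\<bar>/2))^2)"
    unfolding D_def dist_rcis_S[OF r] S_def sin_sq_abs ..
  have A02: "A0^2 = 4 * r * \<rho> * (S + (sin ((\<phi> + \<psi>)/2))^2)"
    unfolding A0_def cnj_rcis dist_rcis_S[OF r] S_def by simp
  have A12: "A1^2 = 4 * r * \<rho> * (S + (sin ((2*\<theta> - (\<phi> + \<psi>))/2))^2)"
  proof -
    have "A1^2 = 4 * r * \<rho> * (S + (sin ((\<phi> - (2*\<theta> + - \<psi>))/2))^2)"
      unfolding A1_def cnj_rcis cis_rcis dist_rcis_S[OF r] S_def ..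
    also have "(\<phi> - (2*\<theta> + - \<psi>))/2 = - ((2*\<theta> - (\<phi> + \<psi>))/2)" by (simp add: field_simps)
    finally show ?thesis by (simp only: sin_minus power2_minus)
  qed
  have "min (A0^2) (A1^2) = 4 * r * \<rho> * (S + min ((sin ((\<phi> + \<psi>)/2))^2) ((sin ((2*\<theta> - (\<phi> + \<psi>))/2))^2))"
    unfolding A02 A12 using c by (simp add: min_def mult_le_cancel_left_pos)
  also have "\<dots> = 4 * r * \<rho> * (S + (sin (min (\<phi> + \<psi>) (2*\<theta> - (\<phi> + \<psi>)) / 2))^2)"
    using min_sin_sq[OF t, of "\<phi> + \<psi>"] ang by simp
  finally have M0: "min (A0^2) (A1^2) = 4 * r * \<rho> * (S + (sin (min (\<phi> + \<psi>) (2*\<theta> - (\<phi> + \<psi>)) / 2))^2)" .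
  have nn: "0 \<le> A0" "0 \<le> A1" by (simp_all add: A0_def A1_def)
  have "(min A0 A1)^2 = min (A0^2) (A1^2)"
  proof (cases "A0 \<le> A1")
    case True
    hence "A0^2 \<le> A1^2" using nn by (intro power_mono)
    thus ?thesis using True by (simp add: min_def)
  next
    case False
    hence "\<not> A0^2 \<le> A1^2" using nn power2_le_imp_le by blast
    thus ?thesis using False by (simp add: min_def)
  qed
  with M0 have M: "(min A0 A1)^2 = 4 * r * \<rho> * (S + (sin (min (\<phi> + \<psi>) (2*\<theta> - (\<phi> + \<psi>)) / 2))^2)" by simp
  have "(tri_ratio (sector \<theta>) (rcis r \<phi>) (rcis \<rho> \<psi>))^2 = D^2 / (min A0 A1)^2"
    unfolding tri_ratio_polar[OF assms] D_def A0_def A1_def by (simp add: power_divide)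
  also have "\<dots> = (S + (sin (\<bar>\<phi> - \<psi>\<bar>/2))^2) / (S + (sin (min (\<phi> + \<psi>) (2*\<theta> - (\<phi> + \<psi>)) / 2))^2)"
    unfolding D2 M using r by (intro nonzero_mult_divide_mult_cancel_left) simp
  finally show ?thesis unfolding S_def .
qed

lemma S_sinh:
  fixes r q :: real
  assumes "0 < r" "0 < q"
  shows "(r - q)^2 / (4 * r * q) = (sinh (ln (r/q)/2))^2"
proof -
  have gen: "\<And>X C Y::real. C = X*2+1 \<Longrightarrow> C = Y/2 \<Longrightarrow> X = (Y/2-1)/2" by (auto simp: field_simps)
  have h1: "cosh (2 * (ln (r/q)/2)) = (sinh (ln (r/q)/2))^2 * 2 + 1"
    using cosh_double[of "ln (r/q)/2"] cosh_square_eq[of "ln (r/q)/2"] by simp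
  have h2: "cosh (2 * (ln (r/q)/2)) = (r/q + q/r)/2"
    using assms by (simp add: cosh_def exp_minus inverse_eq_divide)
  have "(sinh (ln (r/q)/2))^2 = ((r/q + q/r)/2 - 1)/2" by (rule gen[OF h1 h2])
  also have "\<dots> = (r - q)^2 / (4 * r * q)" using assms
    by (simp add: field_simps power2_eq_square)
  finally show ?thesis ..
qed

lemma pow_rcis:
  assumes "0 < r" "-pi < \<phi>" "\<phi> \<le> pi"
  shows "(rcis r \<phi>) powr (complex_of_real k) = rcis (r powr k) (k * \<phi>)"
proof -
  have nz: "rcis r \<phi> \<noteq> 0" using assms by simp
  have "Ln (rcis r \<phi>) = Complex (ln r) \<phi>" using assms by (intro Ln_rcis) auto
  hence "complex_of_real k * Ln (rcis r \<phi>) = Complex (k * ln r) (k * \<phi>)"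
    by (simp add: complex_eq_iff)
  moreover have "(rcis r \<phi>) powr (complex_of_real k) = exp (complex_of_real k * Ln (rcis r \<phi>))"
    using nz by (simp add: powr_def)
  ultimately have "(rcis r \<phi>) powr (complex_of_real k) = exp (Complex (k * ln r) (k * \<phi>))"
    by simp
  also have "\<dots> = exp (k * ln r) * cis (k * \<phi>)" by (simp add: exp_eq_polar exp_of_real)
  also have "\<dots> = rcis (r powr k) (k * \<phi>)" using assms by (simp add: rcis_def powr_def)
  finally show ?thesis .
qed

lemma sector_polar:
  assumes t: "0 < \<theta>" and x: "x \<in> sector \<theta>"
  shows "x = rcis (cmod x) (Arg x)" "0 < cmod x" "0 < Arg x" "Arg x < \<theta>"
proof -
  show "x = rcis (cmod x) (Arg x)" by (simp add: rcis_cmod_Arg)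
  show "0 < Arg x" "Arg x < \<theta>" using x by (auto simp: sector_def)
  hence "x \<noteq> 0" by (auto simp: Arg_zero)
  thus "0 < cmod x" by simp
qed


lemma tri_nonneg:
  assumes t: "0 < \<theta>" "\<theta> \<le> pi" and r: "0 < r" "0 < \<rho>"
    and ang: "0 < \<phi>" "\<phi> < \<theta>" "0 < \<psi>" "\<psi> < \<theta>"
  shows "0 \<le> tri_ratio (sector \<theta>) (rcis r \<phi>) (rcis \<rho> \<psi>)"
  unfolding tri_ratio_polar[OF assms] by simp

lemma forms:
  assumes \<alpha>: "0 < \<alpha>" "\<alpha> \<le> pi" and \<beta>: "0 < \<beta>" "\<beta> \<le> pi" and r: "0 < r" "0 < \<rho>"
    and ang: "0 < \<phi>" "\<phi> < \<alpha>" "0 < \<psi>" "\<psi> < \<alpha>"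
  defines "k \<equiv> \<beta> / \<alpha>" and "L \<equiv> ln (r/\<rho>)/2" and "a \<equiv> \<bar>\<phi> - \<psi>\<bar>/2"
    and "b \<equiv> min (\<phi> + \<psi>) (2*\<alpha> - (\<phi> + \<psi>)) / 2"
  shows "(tri_ratio (sector \<alpha>) (rcis r \<phi>) (rcis \<rho> \<psi>))^2 = ((sinh L)^2 + (sin a)^2) / ((sinh L)^2 + (sin b)^2)"
    and "(tri_ratio (sector \<beta>) (sector_pow \<alpha> \<beta> (rcis r \<phi>)) (sector_pow \<alpha> \<beta> (rcis \<rho> \<psi>)))^2
          = ((sinh (k*L))^2 + (sin (k*a))^2) / ((sinh (k*L))^2 + (sin (k*b))^2)"
    and "0 \<le> a" "a \<le> b" "0 < b" "b \<le> \<alpha>/2"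
    and "sector_pow \<alpha> \<beta> (rcis r \<phi>) = rcis (r powr k) (k*\<phi>)"
    and "sector_pow \<alpha> \<beta> (rcis \<rho> \<psi>) = rcis (\<rho> powr k) (k*\<psi>)"
proof -
  have kp: "0 < k" using \<alpha> \<beta> by (simp add: k_def)
  have k\<alpha>: "k * \<alpha> = \<beta>" using \<alpha> by (simp add: k_def)
  show "(tri_ratio (sector \<alpha>) (rcis r \<phi>) (rcis \<rho> \<psi>))^2 = ((sinh L)^2 + (sin a)^2) / ((sinh L)^2 + (sin b)^2)"
    unfolding tri_sq_form[OF \<alpha> r ang] S_sinh[OF r] L_def a_def b_def ..
  show fx: "sector_pow \<alpha> \<beta> (rcis r \<phi>) = rcis (r powr k) (k*\<phi>)"
    unfolding sector_pow_def k_def using r ang \<alpha> by (intro pow_rcis) auto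
  show fy: "sector_pow \<alpha> \<beta> (rcis \<rho> \<psi>) = rcis (\<rho> powr k) (k*\<psi>)"
    unfolding sector_pow_def k_def using r ang \<alpha> by (intro pow_rcis) auto
  have r': "0 < r powr k" "0 < \<rho> powr k" using r by simp_all
  have ang': "0 < k*\<phi>" "k*\<phi> < \<beta>" "0 < k*\<psi>" "k*\<psi> < \<beta>"
    using ang kp k\<alpha> by (auto simp: mult_strict_left_mono[of _ _ k, OF _ kp, simplified] )
  have eL: "ln (r powr k / \<rho> powr k) / 2 = k * L"
    using r by (simp add: L_def powr_divide[symmetric] ln_powr ln_div)
  have ea: "\<bar>k*\<phi> - k*\<psi>\<bar>/2 = k * a"
    using kp by (simp add: a_def right_diff_distrib[symmetric] abs_mult)
  have eb: "min (k*\<phi> + k*\<psi>) (2*\<beta> - (k*\<phi> + k*\<psi>)) / 2 = k * b"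
  proof -
    have "2*\<beta> - (k*\<phi> + k*\<psi>) = k * (2*\<alpha> - (\<phi> + \<psi>))" using k\<alpha> by (simp add: algebra_simps)
    moreover have "k*\<phi> + k*\<psi> = k * (\<phi> + \<psi>)" by (simp add: algebra_simps)
    ultimately show ?thesis using kp by (simp add: b_def min_mult_distrib_left)
  qed
  show "(tri_ratio (sector \<beta>) (sector_pow \<alpha> \<beta> (rcis r \<phi>)) (sector_pow \<alpha> \<beta> (rcis \<rho> \<psi>)))^2
          = ((sinh (k*L))^2 + (sin (k*a))^2) / ((sinh (k*L))^2 + (sin (k*b))^2)"
    unfolding fx fy tri_sq_form[OF \<beta> r' ang'] S_sinh[OF r'] eL ea eb ..
  show "0 \<le> a" by (simp add: a_def)
  show "a \<le> b" using ang by (simp add: a_def b_def abs_le_iff)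
  show "0 < b" using ang by (simp add: b_def)
  show "b \<le> \<alpha>/2" by (simp add: b_def)
qed


lemma tri_nonneg':
  assumes t: "0 < \<theta>" "\<theta> \<le> pi"
  shows "0 \<le> tri_ratio (sector \<theta>) x y"
proof -
  have "0 \<in> frontier (sector \<theta>)" unfolding frontier_sector[OF t] using sector_char[OF t, of 0] by (simp add: P2_def)
  hence ne: "frontier (sector \<theta>) \<noteq> {}" by blast
  have "0 \<le> (INF z\<in>frontier (sector \<theta>). cmod (x - z) + cmod (z - y))"
    using ne by (intro cINF_greatest) auto
  thus ?thesis unfolding tri_ratio_def by simp
qed

lemma main_ineq:
  assumes \<alpha>: "0 < \<alpha>" "\<alpha> \<le> pi" and \<beta>: "0 < \<beta>" "\<beta> \<le> pi"
    and x: "x \<in> sector \<alpha>" and y: "y \<in> sector \<alpha>"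
  defines "C \<equiv> \<beta> * sin (\<alpha> / 2) / (\<alpha> * sin (\<beta> / 2))"
  defines "s \<equiv> tri_ratio (sector \<alpha>) x y"
  defines "s' \<equiv> tri_ratio (sector \<beta>) (sector_pow \<alpha> \<beta> x) (sector_pow \<alpha> \<beta> y)"
  shows "(\<alpha> \<le> \<beta> \<longrightarrow> s \<le> s' \<and> s' \<le> C * s) \<and> (\<beta> < \<alpha> \<longrightarrow> C * s \<le> s' \<and> s' \<le> s)"
proof -
  define r where "r = cmod x"
  define \<phi> where "\<phi> = Arg x"
  define \<rho> where "\<rho> = cmod y"
  define \<psi> where "\<psi> = Arg y"
  note px = sector_polar[OF \<alpha>(1) x, folded r_def \<phi>_def]
  note py = sector_polar[OF \<alpha>(1) y, folded \<rho>_def \<psi>_def]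
  define k where "k = \<beta> / \<alpha>"
  define L where "L = ln (r/\<rho>)/2"
  define a where "a = \<bar>\<phi> - \<psi>\<bar>/2"
  define b where "b = min (\<phi> + \<psi>) (2*\<alpha> - (\<phi> + \<psi>)) / 2"
  note F = forms[OF \<alpha> \<beta> px(2) py(2) px(3) px(4) py(3) py(4), folded k_def L_def a_def b_def px(1) py(1)]
  have s2: "s^2 = ((sinh L)^2 + (sin a)^2) / ((sinh L)^2 + (sin b)^2)" unfolding s_def F(1) ..
  have s'2: "s'^2 = ((sinh (k*L))^2 + (sin (k*a))^2) / ((sinh (k*L))^2 + (sin (k*b))^2)" unfolding s'_def F(2) ..
  have s0: "0 \<le> s" "0 \<le> s'" unfolding s_def s'_def using tri_nonneg' \<alpha> \<beta> by auto
  have kp: "0 < k" using \<alpha> \<beta> by (simp add: k_def)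
  have k\<alpha>: "k * \<alpha> = \<beta>" using \<alpha> by (simp add: k_def)
  have sa: "0 < sin (\<alpha>/2)" using \<alpha> by (intro sin_gt_zero) auto
  have sb: "0 < sin (\<beta>/2)" using \<beta> by (intro sin_gt_zero) auto
  have C0: "0 < C" unfolding C_def using \<alpha> \<beta> sa sb by simp
  have bb: "k * b \<le> \<beta>/2" using F(6) kp k\<alpha> by (metis mult_left_mono less_imp_le times_divide_eq_right)
  have case1: "\<alpha> \<le> \<beta> \<longrightarrow> s \<le> s' \<and> s' \<le> C * s"
  proof
    assume le: "\<alpha> \<le> \<beta>"
    have k1: "1 \<le> k" using le \<alpha> by (simp add: k_def)
    have kb: "k * b \<le> pi/2" using bb \<beta> by simp
    have k\<alpha>pi: "k * \<alpha> \<le> pi" using k\<alpha> \<beta> by simp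
    note AI = abstract_ineq[OF k1 F(3) F(4) F(5) kb F(6) k\<alpha>pi, of L]
    have eC: "k * sin (\<alpha>/2) / sin (k*\<alpha>/2) = C" using \<alpha> unfolding C_def k_def by (simp add: field_simps)
    have "s^2 \<le> s'^2" unfolding s2 s'2 using AI(1) .
    hence g1: "s \<le> s'" using s0 power2_le_imp_le by blast
    have "s'^2 \<le> C^2 * s^2" unfolding s2 s'2 using AI(2) unfolding eC .
    hence "s'^2 \<le> (C * s)^2" by (simp add: power_mult_distrib)
    hence "s' \<le> C * s" using s0 C0 power2_le_imp_le by (metis mult_nonneg_nonneg less_imp_le)
    with g1 show "s \<le> s' \<and> s' \<le> C * s" by blast
  qed
  have case2: "\<beta> < \<alpha> \<longrightarrow> C * s \<le> s' \<and> s' \<le> s"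
  proof
    assume lt: "\<beta> < \<alpha>"
    define K where "K = \<alpha> / \<beta>"
    have K1: "1 \<le> K" using lt \<beta> by (simp add: K_def)
    have kk: "\<And>t. K * (k * t) = t" using \<alpha> \<beta> by (simp add: K_def k_def)
    have a0: "0 \<le> k * a" using kp F(3) by simp
    have ab: "k * a \<le> k * b" using kp F(4) by simp
    have b0: "0 < k * b" using kp F(5) by simp
    have kb: "K * (k * b) \<le> pi/2" unfolding kk using F(6) \<alpha> by simp
    have K\<beta>: "K * \<beta> \<le> pi" using \<alpha> \<beta> by (simp add: K_def)
    note AI = abstract_ineq[OF K1 a0 ab b0 kb bb K\<beta>, of "k*L", unfolded kk]
    define C1 where "C1 = K * sin (\<beta>/2) / sin (K*\<beta>/2)"
    have eK: "K*\<beta>/2 = \<alpha>/2" using \<beta> by (simp add: K_def)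
    have CC: "C * C1 = 1" unfolding C_def C1_def eK K_def using \<alpha> \<beta> sa sb by (simp add: field_simps)
    have "s'^2 \<le> s^2" unfolding s2 s'2 using AI(1) .
    hence g2: "s' \<le> s" using s0 power2_le_imp_le by blast
    have "s^2 \<le> C1^2 * s'^2" unfolding s2 s'2 C1_def using AI(2) .
    hence "C^2 * s^2 \<le> C^2 * (C1^2 * s'^2)" by (intro mult_left_mono) auto
    also have "C^2 * (C1^2 * s'^2) = (C * C1)^2 * s'^2" by (simp add: power_mult_distrib)
    finally have "(C * s)^2 \<le> s'^2" unfolding CC by (simp add: power_mult_distrib)
    hence "C * s \<le> s'" using s0 power2_le_imp_le by blast
    with g2 show "C * s \<le> s' \<and> s' \<le> s" by blast
  qed
  from case1 case2 show ?thesis by blast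
qed


lemma lim_top:
  fixes c q :: real
  assumes c: "0 < c" and q: "0 < q"
  shows "((\<lambda>L. sqrt ((sinh (c*L))^2 / ((sinh (c*L))^2 + q))) \<longlongrightarrow> 1) at_top"
proof -
  have f1: "filterlim (\<lambda>L. c * L) at_top at_top"
    by (rule filterlim_tendsto_pos_mult_at_top[OF tendsto_const c filterlim_ident])
  have f2: "filterlim (\<lambda>L. sinh (c * L)) at_top at_top"
    by (rule filterlim_compose[OF sinh_real_at_top f1])
  have f3: "filterlim (\<lambda>L. (sinh (c * L))^2) at_top at_top"
    by (rule filterlim_pow_at_top[OF _ f2]) simp
  have f4: "filterlim (\<lambda>L. q + (sinh (c * L))^2) at_top at_top"
    by (rule filterlim_tendsto_add_at_top[OF tendsto_const f3])
  have t1: "((\<lambda>L. q / (q + (sinh (c * L))^2)) \<longlongrightarrow> 0) at_top"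
    by (rule tendsto_divide_0[OF tendsto_const filterlim_at_top_imp_at_infinity[OF f4]])
  have t2: "((\<lambda>L. 1 - q / (q + (sinh (c * L))^2)) \<longlongrightarrow> 1 - 0) at_top"
    by (intro tendsto_intros t1)
  have e: "\<And>L. 1 - q / (q + (sinh (c * L))^2) = (sinh (c*L))^2 / ((sinh (c*L))^2 + q)"
  proof -
    fix L
    have "0 < q + (sinh (c * L))^2" using q by (simp add: add_pos_nonneg)
    thus "1 - q / (q + (sinh (c * L))^2) = (sinh (c*L))^2 / ((sinh (c*L))^2 + q)"
      by (simp add: field_simps)
  qed
  have "((\<lambda>L. (sinh (c*L))^2 / ((sinh (c*L))^2 + q)) \<longlongrightarrow> 1) at_top"
    using t2 unfolding e by simp
  hence "((\<lambda>L. sqrt ((sinh (c*L))^2 / ((sinh (c*L))^2 + q))) \<longlongrightarrow> sqrt 1) at_top"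
    by (rule tendsto_real_sqrt)
  thus ?thesis by simp
qed

lemma sinh_quot:
  fixes k :: real
  shows "((\<lambda>L. sinh (k*L) / L) \<longlongrightarrow> k) (at_right 0)"
proof -
  have "((\<lambda>L. sinh (k*L)) has_field_derivative k) (at 0 within {0<..})"
    by (auto intro!: derivative_eq_intros)
  hence "((\<lambda>y. (sinh (k*y) - sinh (k*0)) / (y - 0)) \<longlongrightarrow> k) (at 0 within {0<..})"
    by (simp only: has_field_derivative_iff)
  thus ?thesis by simp
qed

lemma lim_ratio:
  fixes k qa qb :: real
  assumes k: "0 < k" and qa: "0 < qa" and qb: "0 < qb"
  shows "((\<lambda>L. sqrt ((sinh (k*L))^2 / ((sinh (k*L))^2 + qb)) / sqrt ((sinh L)^2 / ((sinh L)^2 + qa)))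
          \<longlongrightarrow> k * sqrt (qa / qb)) (at_right 0)"
proof -
  have h1: "((\<lambda>L. sinh (k*L) / L) \<longlongrightarrow> k) (at_right 0)" by (rule sinh_quot)
  have h2: "((\<lambda>L::real. sinh (1*L) / L) \<longlongrightarrow> 1) (at_right 0)" by (rule sinh_quot[of 1])
  have h3: "((\<lambda>L. (sinh (k*L) / L) / (sinh (1*L) / L)) \<longlongrightarrow> k / 1) (at_right 0)"
    by (rule tendsto_divide[OF h1 h2]) simp
  have z: "((\<lambda>L::real. L) \<longlongrightarrow> 0) (at_right 0)" by (rule tendsto_ident_at)
  have h4: "((\<lambda>L. ((sinh (k*L) / L) / (sinh (1*L) / L))^2 * (((sinh L)^2 + qa) / ((sinh (k*L))^2 + qb)))
       \<longlongrightarrow> (k/1)^2 * (((sinh 0)^2 + qa) / ((sinh (k*0))^2 + qb))) (at_right 0)"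
    by (intro tendsto_intros h3 z) (use qb in simp)
  hence h5: "((\<lambda>L. sqrt (((sinh (k*L) / L) / (sinh (1*L) / L))^2 * (((sinh L)^2 + qa) / ((sinh (k*L))^2 + qb))))
       \<longlongrightarrow> sqrt ((k/1)^2 * (((sinh 0)^2 + qa) / ((sinh (k*0))^2 + qb)))) (at_right 0)"
    by (rule tendsto_real_sqrt)
  have lim: "sqrt ((k/1)^2 * (((sinh 0)^2 + qa) / ((sinh (k*0))^2 + qb))) = k * sqrt (qa / qb)"
  proof -
    have "(k/1)^2 * (((sinh 0)^2 + qa) / ((sinh (k*0))^2 + qb)) = k^2 * (qa / qb)" by simp
    hence "sqrt ((k/1)^2 * (((sinh 0)^2 + qa) / ((sinh (k*0))^2 + qb))) = sqrt (k^2) * sqrt (qa / qb)"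
      by (simp only: real_sqrt_mult)
    thus ?thesis using k by simp
  qed
  have ev: "\<forall>\<^sub>F L in at_right 0. sqrt (((sinh (k*L) / L) / (sinh (1*L) / L))^2 * (((sinh L)^2 + qa) / ((sinh (k*L))^2 + qb)))
      = sqrt ((sinh (k*L))^2 / ((sinh (k*L))^2 + qb)) / sqrt ((sinh L)^2 / ((sinh L)^2 + qa))"
    using eventually_at_right_less[of 0]
  proof (rule eventually_mono)
    fix L :: real assume L: "0 < L"
    have sL: "0 < sinh L" using L by simp
    have p1: "0 < (sinh L)^2 + qa" "0 < (sinh (k*L))^2 + qb" using qa qb by (simp_all add: add_nonneg_pos)
    have E: "((sinh (k*L) / L) / (sinh (1*L) / L))^2 * (((sinh L)^2 + qa) / ((sinh (k*L))^2 + qb))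
        = ((sinh (k*L))^2 / ((sinh (k*L))^2 + qb)) / ((sinh L)^2 / ((sinh L)^2 + qa))"
      using L sL p1 by (simp add: field_simps power2_eq_square)
    thus "sqrt (((sinh (k*L) / L) / (sinh (1*L) / L))^2 * (((sinh L)^2 + qa) / ((sinh (k*L))^2 + qb)))
      = sqrt ((sinh (k*L))^2 / ((sinh (k*L))^2 + qb)) / sqrt ((sinh L)^2 / ((sinh L)^2 + qa))"
      by (simp only: E real_sqrt_divide)
  qed
  show ?thesis using tendsto_cong[OF ev] h5 unfolding lim by simp
qed


lemma rcis_in_sector:
  assumes "0 < \<alpha>" "\<alpha> \<le> pi" "0 < r"
  shows "rcis r (\<alpha>/2) \<in> sector \<alpha>"
proof -
  have "Arg (rcis r (\<alpha>/2)) = \<alpha>/2" using assms by (intro Arg_rcis) auto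
  thus ?thesis using assms by (simp add: sector_def)
qed

lemma bisector:
  assumes \<alpha>: "0 < \<alpha>" "\<alpha> \<le> pi" and \<beta>: "0 < \<beta>" "\<beta> \<le> pi" and L: "L \<noteq> 0"
  shows "rcis (exp (2*L)) (\<alpha>/2) \<in> sector \<alpha>" "rcis 1 (\<alpha>/2) \<in> sector \<alpha>"
    "rcis (exp (2*L)) (\<alpha>/2) \<noteq> rcis 1 (\<alpha>/2)"
    "tri_ratio (sector \<alpha>) (rcis (exp (2*L)) (\<alpha>/2)) (rcis 1 (\<alpha>/2))
       = sqrt ((sinh L)^2 / ((sinh L)^2 + (sin (\<alpha>/2))^2))"
    "tri_ratio (sector \<beta>) (sector_pow \<alpha> \<beta> (rcis (exp (2*L)) (\<alpha>/2))) (sector_pow \<alpha> \<beta> (rcis 1 (\<alpha>/2)))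
       = sqrt ((sinh ((\<beta>/\<alpha>)*L))^2 / ((sinh ((\<beta>/\<alpha>)*L))^2 + (sin (\<beta>/2))^2))"
proof -
  show "rcis (exp (2*L)) (\<alpha>/2) \<in> sector \<alpha>" "rcis 1 (\<alpha>/2) \<in> sector \<alpha>"
    using rcis_in_sector[OF \<alpha>] by auto
  have "exp (2*L) \<noteq> 1" using L by simp
  hence "cmod (rcis (exp (2*L)) (\<alpha>/2)) \<noteq> cmod (rcis 1 (\<alpha>/2))" by simp
  thus "rcis (exp (2*L)) (\<alpha>/2) \<noteq> rcis 1 (\<alpha>/2)" by metis
  have r: "0 < exp (2*L)" "(0::real) < 1" by simp_all
  have ang: "0 < \<alpha>/2" "\<alpha>/2 < \<alpha>" using \<alpha> by simp_all
  note F = forms[OF \<alpha> \<beta> r ang ang]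
  have eL: "ln (exp (2*L) / 1) / 2 = L" by simp
  have eb: "min (\<alpha>/2 + \<alpha>/2) (2*\<alpha> - (\<alpha>/2 + \<alpha>/2)) / 2 = \<alpha>/2" by simp
  have ek: "\<beta> / \<alpha> * (\<alpha>/2) = \<beta>/2" using \<alpha> by simp
  have s1: "(tri_ratio (sector \<alpha>) (rcis (exp (2*L)) (\<alpha>/2)) (rcis 1 (\<alpha>/2)))^2 = (sinh L)^2 / ((sinh L)^2 + (sin (\<alpha>/2))^2)"
    using F(1) unfolding eL eb by simp
  have s2: "(tri_ratio (sector \<beta>) (sector_pow \<alpha> \<beta> (rcis (exp (2*L)) (\<alpha>/2))) (sector_pow \<alpha> \<beta> (rcis 1 (\<alpha>/2))))^2
       = (sinh ((\<beta>/\<alpha>)*L))^2 / ((sinh ((\<beta>/\<alpha>)*L))^2 + (sin (\<beta>/2))^2)"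
    using F(2) unfolding eL eb ek by simp
  show "tri_ratio (sector \<alpha>) (rcis (exp (2*L)) (\<alpha>/2)) (rcis 1 (\<alpha>/2))
       = sqrt ((sinh L)^2 / ((sinh L)^2 + (sin (\<alpha>/2))^2))"
    unfolding s1[symmetric] using tri_nonneg'[OF \<alpha>] by simp
  show "tri_ratio (sector \<beta>) (sector_pow \<alpha> \<beta> (rcis (exp (2*L)) (\<alpha>/2))) (sector_pow \<alpha> \<beta> (rcis 1 (\<alpha>/2)))
       = sqrt ((sinh ((\<beta>/\<alpha>)*L))^2 / ((sinh ((\<beta>/\<alpha>)*L))^2 + (sin (\<beta>/2))^2))"
    unfolding s2[symmetric] using tri_nonneg'[OF \<beta>] by simp
qed

lemma sharp_all:
  assumes \<alpha>: "0 < \<alpha>" "\<alpha> \<le> pi" and \<beta>: "0 < \<beta>" "\<beta> \<le> pi"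
  defines "C \<equiv> \<beta> * sin (\<alpha> / 2) / (\<alpha> * sin (\<beta> / 2))"
  shows "\<And>c. 1 < c \<Longrightarrow> (\<exists>x\<in>sector \<alpha>. \<exists>y\<in>sector \<alpha>. x \<noteq> y \<and>
      tri_ratio (sector \<beta>) (sector_pow \<alpha> \<beta> x) (sector_pow \<alpha> \<beta> y) < c * tri_ratio (sector \<alpha>) x y)" "\<And>c. c < 1 \<Longrightarrow> (\<exists>x\<in>sector \<alpha>. \<exists>y\<in>sector \<alpha>. x \<noteq> y \<and>
      c * tri_ratio (sector \<alpha>) x y < tri_ratio (sector \<beta>) (sector_pow \<alpha> \<beta> x) (sector_pow \<alpha> \<beta> y))"
    "\<And>c. C < c \<Longrightarrow> (\<exists>x\<in>sector \<alpha>. \<exists>y\<in>sector \<alpha>. x \<noteq> y \<and>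
      tri_ratio (sector \<beta>) (sector_pow \<alpha> \<beta> x) (sector_pow \<alpha> \<beta> y) < c * tri_ratio (sector \<alpha>) x y)" "\<And>c. c < C \<Longrightarrow> (\<exists>x\<in>sector \<alpha>. \<exists>y\<in>sector \<alpha>. x \<noteq> y \<and>
      c * tri_ratio (sector \<alpha>) x y < tri_ratio (sector \<beta>) (sector_pow \<alpha> \<beta> x) (sector_pow \<alpha> \<beta> y))"
proof -
  define k where "k = \<beta>/\<alpha>"
  have kp: "0 < k" using \<alpha> \<beta> by (simp add: k_def)
  define hs where "hs = (\<lambda>L. sqrt ((sinh L)^2 / ((sinh L)^2 + (sin (\<alpha>/2))^2)))"
  define gs where "gs = (\<lambda>L. sqrt ((sinh (k*L))^2 / ((sinh (k*L))^2 + (sin (\<beta>/2))^2)))"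
  have sa: "0 < sin (\<alpha>/2)" using \<alpha> by (intro sin_gt_zero) auto
  have sb: "0 < sin (\<beta>/2)" using \<beta> by (intro sin_gt_zero) auto
  have qa: "0 < (sin (\<alpha>/2))^2" and qb: "0 < (sin (\<beta>/2))^2" using sa sb by simp_all
  have B: "(\<exists>x\<in>sector \<alpha>. \<exists>y\<in>sector \<alpha>. x \<noteq> y \<and>
      tri_ratio (sector \<beta>) (sector_pow \<alpha> \<beta> x) (sector_pow \<alpha> \<beta> y) < c * tri_ratio (sector \<alpha>) x y)" if "L \<noteq> 0" "gs L < c * hs L" for c L
  proof -
    note bi = bisector[OF \<alpha> \<beta> that(1)]
    have "tri_ratio (sector \<beta>) (sector_pow \<alpha> \<beta> (rcis (exp (2*L)) (\<alpha>/2))) (sector_pow \<alpha> \<beta> (rcis 1 (\<alpha>/2)))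
       < c * tri_ratio (sector \<alpha>) (rcis (exp (2*L)) (\<alpha>/2)) (rcis 1 (\<alpha>/2))"
      using that(2) unfolding bi(4) bi(5) hs_def gs_def k_def .
    thus ?thesis using bi(1-3) by blast
  qed
  have B': "(\<exists>x\<in>sector \<alpha>. \<exists>y\<in>sector \<alpha>. x \<noteq> y \<and>
      c * tri_ratio (sector \<alpha>) x y < tri_ratio (sector \<beta>) (sector_pow \<alpha> \<beta> x) (sector_pow \<alpha> \<beta> y))" if "L \<noteq> 0" "c * hs L < gs L" for c L
  proof -
    note bi = bisector[OF \<alpha> \<beta> that(1)]
    have "c * tri_ratio (sector \<alpha>) (rcis (exp (2*L)) (\<alpha>/2)) (rcis 1 (\<alpha>/2)) <
       tri_ratio (sector \<beta>) (sector_pow \<alpha> \<beta> (rcis (exp (2*L)) (\<alpha>/2))) (sector_pow \<alpha> \<beta> (rcis 1 (\<alpha>/2)))"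
      using that(2) unfolding bi(4) bi(5) hs_def gs_def k_def .
    thus ?thesis using bi(1-3) by blast
  qed
  have hs1: "(hs \<longlongrightarrow> 1) at_top" unfolding hs_def using lim_top[OF zero_less_one qa] by simp
  have gs1: "(gs \<longlongrightarrow> 1) at_top" unfolding gs_def using lim_top[OF kp qb] by simp
  have hpos: "\<And>L. 0 < L \<Longrightarrow> 0 < hs L" unfolding hs_def using qa
    by (simp add: add_pos_pos)
  have ev0: "\<forall>\<^sub>F L in at_top. (0::real) < L" by (rule eventually_gt_at_top)
  have ratio: "((\<lambda>L. gs L / hs L) \<longlongrightarrow> C) (at_right 0)"
  proof -
    have "C = k * sqrt ((sin (\<alpha>/2))^2 / (sin (\<beta>/2))^2)"
      using sa sb \<alpha> unfolding C_def k_def by (simp add: real_sqrt_divide)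
    thus ?thesis unfolding gs_def hs_def using lim_ratio[OF kp qa qb] by simp
  qed
  have evr: "\<forall>\<^sub>F L in at_right 0. (0::real) < L" by (rule eventually_at_right_less)
  show "(\<exists>x\<in>sector \<alpha>. \<exists>y\<in>sector \<alpha>. x \<noteq> y \<and>       tri_ratio (sector \<beta>) (sector_pow \<alpha> \<beta> x) (sector_pow \<alpha> \<beta> y) < c * tri_ratio (sector \<alpha>) x y)" if c: "1 < c" for c
  proof -
    have "((\<lambda>L. c * hs L - gs L) \<longlongrightarrow> c * 1 - 1) at_top" by (intro tendsto_intros hs1 gs1)
    hence "\<forall>\<^sub>F L in at_top. 0 < c * hs L - gs L" using c by (intro order_tendstoD(1)) auto
    with ev0 have "\<forall>\<^sub>F L in at_top. 0 < L \<and> 0 < c * hs L - gs L" by (rule eventually_conj)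
    from eventually_happens'[OF _ this] obtain L where "0 < L \<and> 0 < c * hs L - gs L" by auto
    thus ?thesis using B[of L c] by simp
  qed
  show "(\<exists>x\<in>sector \<alpha>. \<exists>y\<in>sector \<alpha>. x \<noteq> y \<and>       c * tri_ratio (sector \<alpha>) x y < tri_ratio (sector \<beta>) (sector_pow \<alpha> \<beta> x) (sector_pow \<alpha> \<beta> y))" if c: "c < 1" for c
  proof -
    have "((\<lambda>L. gs L - c * hs L) \<longlongrightarrow> 1 - c * 1) at_top" by (intro tendsto_intros hs1 gs1)
    hence "\<forall>\<^sub>F L in at_top. 0 < gs L - c * hs L" using c by (intro order_tendstoD(1)) auto
    with ev0 have "\<forall>\<^sub>F L in at_top. 0 < L \<and> 0 < gs L - c * hs L" by (rule eventually_conj)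
    from eventually_happens'[OF _ this] obtain L where "0 < L \<and> 0 < gs L - c * hs L" by auto
    thus ?thesis using B'[of L c] by simp
  qed
  show "(\<exists>x\<in>sector \<alpha>. \<exists>y\<in>sector \<alpha>. x \<noteq> y \<and>       tri_ratio (sector \<beta>) (sector_pow \<alpha> \<beta> x) (sector_pow \<alpha> \<beta> y) < c * tri_ratio (sector \<alpha>) x y)" if c: "C < c" for c
  proof -
    have "\<forall>\<^sub>F L in at_right 0. gs L / hs L < c" using ratio c by (intro order_tendstoD(2))
    with evr have "\<forall>\<^sub>F L in at_right 0. 0 < L \<and> gs L / hs L < c" by (rule eventually_conj)
    from eventually_happens'[OF _ this] obtain L where "0 < L \<and> gs L / hs L < c" by auto
    hence L: "0 < L" "gs L / hs L < c" by auto
    hence "gs L < c * hs L" using hpos[OF L(1)] by (simp add: divide_less_eq)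
    thus ?thesis using B[of L c] L by simp
  qed
  show "(\<exists>x\<in>sector \<alpha>. \<exists>y\<in>sector \<alpha>. x \<noteq> y \<and>       c * tri_ratio (sector \<alpha>) x y < tri_ratio (sector \<beta>) (sector_pow \<alpha> \<beta> x) (sector_pow \<alpha> \<beta> y))" if c: "c < C" for c
  proof -
    have "\<forall>\<^sub>F L in at_right 0. c < gs L / hs L" using ratio c by (intro order_tendstoD(1))
    with evr have "\<forall>\<^sub>F L in at_right 0. 0 < L \<and> c < gs L / hs L" by (rule eventually_conj)
    from eventually_happens'[OF _ this] obtain L where "0 < L \<and> c < gs L / hs L" by auto
    hence L: "0 < L" "c < gs L / hs L" by auto
    hence "c * hs L < gs L" using hpos[OF L(1)] by (simp add: less_divide_eq)
    thus ?thesis using B'[of L c] L by simp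
  qed
qed

theorem lemma5p10:
  fixes \<alpha> \<beta> :: real
  assumes "0 < \<alpha>" "\<alpha> \<le> pi" "0 < \<beta>" "\<beta> \<le> pi"
  defines "C \<equiv> \<beta> * sin (\<alpha> / 2) / (\<alpha> * sin (\<beta> / 2))"
  defines "f \<equiv> sector_pow \<alpha> \<beta>"
  shows
   "(\<alpha> \<le> \<beta> \<longrightarrow>
       (\<forall>x\<in>sector \<alpha>. \<forall>y\<in>sector \<alpha>.
          tri_ratio (sector \<alpha>) x y \<le> tri_ratio (sector \<beta>) (f x) (f y) \<and>
          tri_ratio (sector \<beta>) (f x) (f y) \<le> C * tri_ratio (sector \<alpha>) x y) \<and>
       (\<forall>\<epsilon>>0. \<exists>x\<in>sector \<alpha>. \<exists>y\<in>sector \<alpha>. x \<noteq> y \<and>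
          tri_ratio (sector \<beta>) (f x) (f y) < (1 + \<epsilon>) * tri_ratio (sector \<alpha>) x y) \<and>
       (\<forall>\<epsilon>>0. \<exists>x\<in>sector \<alpha>. \<exists>y\<in>sector \<alpha>. x \<noteq> y \<and>
          (C - \<epsilon>) * tri_ratio (sector \<alpha>) x y < tri_ratio (sector \<beta>) (f x) (f y)))
    \<and>
    (\<beta> < \<alpha> \<longrightarrow>
       (\<forall>x\<in>sector \<alpha>. \<forall>y\<in>sector \<alpha>.
          C * tri_ratio (sector \<alpha>) x y \<le> tri_ratio (sector \<beta>) (f x) (f y) \<and>
          tri_ratio (sector \<beta>) (f x) (f y) \<le> tri_ratio (sector \<alpha>) x y) \<and>
       (\<forall>\<epsilon>>0. \<exists>x\<in>sector \<alpha>. \<exists>y\<in>sector \<alpha>. x \<noteq> y \<and>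
          tri_ratio (sector \<beta>) (f x) (f y) < (C + \<epsilon>) * tri_ratio (sector \<alpha>) x y) \<and>
       (\<forall>\<epsilon>>0. \<exists>x\<in>sector \<alpha>. \<exists>y\<in>sector \<alpha>. x \<noteq> y \<and>
          (1 - \<epsilon>) * tri_ratio (sector \<alpha>) x y < tri_ratio (sector \<beta>) (f x) (f y)))"
proof -
  note MI = main_ineq[OF assms(1-4), folded C_def f_def]
  note SH = sharp_all[OF assms(1-4), folded C_def f_def]
  have i1: "\<forall>\<epsilon>>0. \<exists>x\<in>sector \<alpha>. \<exists>y\<in>sector \<alpha>. x \<noteq> y \<and>
          tri_ratio (sector \<beta>) (f x) (f y) < (1 + \<epsilon>) * tri_ratio (sector \<alpha>) x y"
  proof (intro allI impI)
    fix \<epsilon> :: real assume "0 < \<epsilon>" thus "\<exists>x\<in>sector \<alpha>. \<exists>y\<in>sector \<alpha>. x \<noteq> y \<and>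
          tri_ratio (sector \<beta>) (f x) (f y) < (1 + \<epsilon>) * tri_ratio (sector \<alpha>) x y" using SH(1)[of "1+\<epsilon>"] by simp
  qed
  have i2: "\<forall>\<epsilon>>0. \<exists>x\<in>sector \<alpha>. \<exists>y\<in>sector \<alpha>. x \<noteq> y \<and>
          (C - \<epsilon>) * tri_ratio (sector \<alpha>) x y < tri_ratio (sector \<beta>) (f x) (f y)"
  proof (intro allI impI)
    fix \<epsilon> :: real assume "0 < \<epsilon>" thus "\<exists>x\<in>sector \<alpha>. \<exists>y\<in>sector \<alpha>. x \<noteq> y \<and>
          (C - \<epsilon>) * tri_ratio (sector \<alpha>) x y < tri_ratio (sector \<beta>) (f x) (f y)" using SH(4)[of "C-\<epsilon>"] by simp
  qed
  have i3: "\<forall>\<epsilon>>0. \<exists>x\<in>sector \<alpha>. \<exists>y\<in>sector \<alpha>. x \<noteq> y \<and>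
          tri_ratio (sector \<beta>) (f x) (f y) < (C + \<epsilon>) * tri_ratio (sector \<alpha>) x y"
  proof (intro allI impI)
    fix \<epsilon> :: real assume "0 < \<epsilon>" thus "\<exists>x\<in>sector \<alpha>. \<exists>y\<in>sector \<alpha>. x \<noteq> y \<and>
          tri_ratio (sector \<beta>) (f x) (f y) < (C + \<epsilon>) * tri_ratio (sector \<alpha>) x y" using SH(3)[of "C+\<epsilon>"] by simp
  qed
  have i4: "\<forall>\<epsilon>>0. \<exists>x\<in>sector \<alpha>. \<exists>y\<in>sector \<alpha>. x \<noteq> y \<and>
          (1 - \<epsilon>) * tri_ratio (sector \<alpha>) x y < tri_ratio (sector \<beta>) (f x) (f y)"
  proof (intro allI impI)
    fix \<epsilon> :: real assume "0 < \<epsilon>" thus "\<exists>x\<in>sector \<alpha>. \<exists>y\<in>sector \<alpha>. x \<noteq> y \<and>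
          (1 - \<epsilon>) * tri_ratio (sector \<alpha>) x y < tri_ratio (sector \<beta>) (f x) (f y)" using SH(2)[of "1-\<epsilon>"] by simp
  qed
  show ?thesis using MI i1 i2 i3 i4 by (simp only: Ball_def) blast
qed


end
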